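(* Let $M^n$ ($n \geq 2$) be a compact connected manifold without boundary and $f: M^n \rightarrow M^n$ a Morse-Smale diffeomorphism with an attractor periodic point $p$ and a repeller periodic point $q$, and let $x \in W^s(p) \cap W^u(q) \neq \emptyset$. If there is an arc $\gamma \subset W^s(p) \cap W^u(q)$ whose end points are $x$ and $f(x)$, then the induced continuum map $C(f)$ has uncountably many homoclinic points in $\Omega(C(f))$.
   Context: A $C^r$ diffeomorphism ($r\ge1$) is Morse-Smale if its nonwandering set consists of finitely many periodic points, all hyperbolic, with mutually transversal stable and unstable manifolds; $W^s(p)$, $W^u(q)$ denote stable and unstable manifolds. $C(M^n)$ is the hyperspace of nonempty compact connected subsets with the Hausdorff metric and $C(f)(A)=f(A)$; $\Omega(C(f))$ is its nonwandering set. A point $K\in C(M^n)$ is a homoclinic point of $C(f)$ if there is a fixed point $P\ne K$ of $C(f)$ with $C(f)^n(K)\to P$ both as $n\to+\infty$ and as $n\to-\infty$. *)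

theory Defs
  imports "HOL-Analysis.Analysis"
begin

definition C1_map_on :: "'x::euclidean_space set \<Rightarrow> ('x \<Rightarrow> 'y::real_normed_vector) \<Rightarrow> bool" where
  "C1_map_on S g \<longleftrightarrow> (\<exists>D :: 'x \<Rightarrow> ('x \<Rightarrow>\<^sub>L 'y).
      (\<forall>u\<in>S. (g has_derivative blinfun_apply (D u)) (at u)) \<and> continuous_on S D)"

text \<open>A local C^1 parametrisation (inverse chart) of M, modelled on the Euclidean space 'm:
  a C^1 immersion of an open set V of 'm which is a homeomorphism onto an open subset of M.\<close>
definition chart_param ::
    "'a::euclidean_space set \<Rightarrow> ('m::euclidean_space \<Rightarrow> 'a) \<Rightarrow> 'm set \<Rightarrow> bool" where
  "chart_param M \<phi> V \<longleftrightarrow> open V \<and>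
     (\<exists>D :: 'm \<Rightarrow> ('m \<Rightarrow>\<^sub>L 'a).
        (\<forall>u\<in>V. (\<phi> has_derivative blinfun_apply (D u)) (at u)) \<and> continuous_on V D \<and>
        (\<forall>u\<in>V. inj (blinfun_apply (D u)))) \<and>
     \<phi> ` V \<subseteq> M \<and> openin (top_of_set M) (\<phi> ` V) \<and>
     (\<exists>\<psi>. homeomorphism V (\<phi> ` V) \<phi> \<psi>)"

definition submanifold_without_boundary :: "'m::euclidean_space itself \<Rightarrow> 'a::euclidean_space set \<Rightarrow> bool" where
  "submanifold_without_boundary TYPE('m) M \<longleftrightarrow>
     (\<forall>x\<in>M. \<exists>(\<phi> :: 'm \<Rightarrow> 'a) V. chart_param M \<phi> V \<and> x \<in> \<phi> ` V)"

text \<open>Closed (compact, connected) n-manifold, n = DIM('m).\<close>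
definition closed_manifold :: "'m::euclidean_space itself \<Rightarrow> 'a::euclidean_space set \<Rightarrow> bool" where
  "closed_manifold TYPE('m) M \<longleftrightarrow> M \<noteq> {} \<and> compact M \<and> connected M \<and>
     submanifold_without_boundary TYPE('m) M"

definition C1_on_manifold :: "'m::euclidean_space itself \<Rightarrow> 'a::euclidean_space set \<Rightarrow> ('a \<Rightarrow> 'a) \<Rightarrow> bool" where
  "C1_on_manifold TYPE('m) M f \<longleftrightarrow> f ` M \<subseteq> M \<and>
     (\<forall>(\<phi> :: 'm \<Rightarrow> 'a) V. chart_param M \<phi> V \<longrightarrow> C1_map_on V (f \<circ> \<phi>))"

definition C1_diffeomorphism :: "'m::euclidean_space itself \<Rightarrow> 'a::euclidean_space set \<Rightarrow> ('a \<Rightarrow> 'a) \<Rightarrow> bool" where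
  "C1_diffeomorphism TYPE('m) M f \<longleftrightarrow> bij_betw f M M \<and>
     C1_on_manifold TYPE('m) M f \<and> C1_on_manifold TYPE('m) M (inv_into M f)"

definition tangent_curve :: "'a::euclidean_space set \<Rightarrow> 'a \<Rightarrow> 'a \<Rightarrow> (real \<Rightarrow> 'a) \<Rightarrow> bool" where
  "tangent_curve S x v \<gamma> \<longleftrightarrow> (\<exists>e>0. C1_map_on {-e<..<e} \<gamma> \<and> \<gamma> ` {-e<..<e} \<subseteq> S) \<and>
     \<gamma> 0 = x \<and> (\<gamma> has_vector_derivative v) (at 0)"

definition tangent_space :: "'a::euclidean_space set \<Rightarrow> 'a \<Rightarrow> 'a set" where
  "tangent_space S x = {v. \<exists>\<gamma>. tangent_curve S x v \<gamma>}"

definition tangent_map :: "'a::euclidean_space set \<Rightarrow> ('a \<Rightarrow> 'a) \<Rightarrow> 'a \<Rightarrow> 'a \<Rightarrow> 'a" where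
  "tangent_map M g x v = (THE w. \<exists>\<gamma>. tangent_curve M x v \<gamma> \<and> ((g \<circ> \<gamma>) has_vector_derivative w) (at 0))"

definition hyperbolic_splitting ::
    "'a::euclidean_space set \<Rightarrow> ('a \<Rightarrow> 'a) \<Rightarrow> 'a \<Rightarrow> nat \<Rightarrow> 'a set \<Rightarrow> 'a set \<Rightarrow> bool" where
  "hyperbolic_splitting M f p k Es Eu \<longleftrightarrow>
    (let L = tangent_map M (f ^^ k) p in
      subspace Es \<and> subspace Eu \<and> Es \<inter> Eu = {0} \<and>
      {a + b | a b. a \<in> Es \<and> b \<in> Eu} = tangent_space M p \<and>
      L ` Es \<subseteq> Es \<and> L ` Eu \<subseteq> Eu \<and>
      (\<exists>C \<mu>. C > 0 \<and> 0 < \<mu> \<and> \<mu> < 1 \<and>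
         (\<forall>m. \<forall>v\<in>Es. norm ((L ^^ m) v) \<le> C * \<mu> ^ m * norm v) \<and>
         (\<forall>m. \<forall>v\<in>Eu. norm v \<le> C * \<mu> ^ m * norm ((L ^^ m) v))))"

definition hyperbolic_periodic_point :: "'a::euclidean_space set \<Rightarrow> ('a \<Rightarrow> 'a) \<Rightarrow> 'a \<Rightarrow> bool" where
  "hyperbolic_periodic_point M f p \<longleftrightarrow> p \<in> M \<and>
     (\<exists>k>0. (f ^^ k) p = p \<and> (\<exists>Es Eu. hyperbolic_splitting M f p k Es Eu))"

definition attractor_periodic_point :: "'a::euclidean_space set \<Rightarrow> ('a \<Rightarrow> 'a) \<Rightarrow> 'a \<Rightarrow> bool" where
  "attractor_periodic_point M f p \<longleftrightarrow> p \<in> M \<and>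
     (\<exists>k>0. (f ^^ k) p = p \<and> (\<exists>Es. hyperbolic_splitting M f p k Es {0}))"

definition repeller_periodic_point :: "'a::euclidean_space set \<Rightarrow> ('a \<Rightarrow> 'a) \<Rightarrow> 'a \<Rightarrow> bool" where
  "repeller_periodic_point M f p \<longleftrightarrow> p \<in> M \<and>
     (\<exists>k>0. (f ^^ k) p = p \<and> (\<exists>Eu. hyperbolic_splitting M f p k {0} Eu))"

definition stable_set :: "'a::euclidean_space set \<Rightarrow> ('a \<Rightarrow> 'a) \<Rightarrow> 'a \<Rightarrow> 'a set" where
  "stable_set M f p = {y \<in> M. (\<lambda>n. dist ((f ^^ n) y) ((f ^^ n) p)) \<longlonglongrightarrow> 0}"

definition unstable_set :: "'a::euclidean_space set \<Rightarrow> ('a \<Rightarrow> 'a) \<Rightarrow> 'a \<Rightarrow> 'a set" where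
  "unstable_set M f p = stable_set M (inv_into M f) p"

definition nonwandering_set :: "'a::euclidean_space set \<Rightarrow> ('a \<Rightarrow> 'a) \<Rightarrow> 'a set" where
  "nonwandering_set M f = {x \<in> M. \<forall>U. openin (top_of_set M) U \<and> x \<in> U \<longrightarrow>
       (\<exists>n\<ge>1. (f ^^ n) ` U \<inter> U \<noteq> {})}"

definition transversal_at :: "'a::euclidean_space set \<Rightarrow> 'a set \<Rightarrow> 'a set \<Rightarrow> 'a \<Rightarrow> bool" where
  "transversal_at M A B x \<longleftrightarrow>
     {a + b | a b. a \<in> tangent_space A x \<and> b \<in> tangent_space B x} = tangent_space M x"

definition Morse_Smale :: "'m::euclidean_space itself \<Rightarrow> 'a::euclidean_space set \<Rightarrow> ('a \<Rightarrow> 'a) \<Rightarrow> bool" where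
  "Morse_Smale TYPE('m) M f \<longleftrightarrow> C1_diffeomorphism TYPE('m) M f \<and>
     finite (nonwandering_set M f) \<and>
     (\<forall>p\<in>nonwandering_set M f. hyperbolic_periodic_point M f p) \<and>
     (\<forall>p\<in>nonwandering_set M f. \<forall>q\<in>nonwandering_set M f.
        \<forall>x\<in>stable_set M f p \<inter> unstable_set M f q.
          transversal_at M (stable_set M f p) (unstable_set M f q) x)"

definition continua :: "'a::metric_space set \<Rightarrow> 'a set set" where
  "continua M = {A. A \<subseteq> M \<and> A \<noteq> {} \<and> compact A \<and> connected A}"

text \<open>Hausdorff distance between nonempty bounded sets.\<close>
definition hausdist :: "'a::metric_space set \<Rightarrow> 'a set \<Rightarrow> real" where
  "hausdist A B = max (SUP a\<in>A. infdist a B) (SUP b\<in>B. infdist b A)"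

definition continuum_nonwandering :: "'a::metric_space set \<Rightarrow> ('a \<Rightarrow> 'a) \<Rightarrow> 'a set set" where
  "continuum_nonwandering M f = {K \<in> continua M. \<forall>\<epsilon>>0. \<exists>n\<ge>1. \<exists>A\<in>continua M.
       hausdist A K < \<epsilon> \<and> hausdist ((f ^^ n) ` A) K < \<epsilon>}"

text \<open>Homoclinic point of C(f); backward iterates of C(f) are images under f^{-1}.\<close>
definition continuum_homoclinic :: "'a::metric_space set \<Rightarrow> ('a \<Rightarrow> 'a) \<Rightarrow> 'a set \<Rightarrow> bool" where
  "continuum_homoclinic M f K \<longleftrightarrow> K \<in> continua M \<and>
     (\<exists>P \<in> continua M. P \<noteq> K \<and> f ` P = P \<and>
        (\<lambda>n. hausdist ((f ^^ n) ` K) P) \<longlonglongrightarrow> 0 \<and>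
        (\<lambda>n. hausdist ((inv_into M f ^^ n) ` K) P) \<longlonglongrightarrow> 0)"

end

theory Submission
  imports Defs
begin

lemma hd_alt_ball:
  assumes "(f has_derivative f') (at x)" "e > 0"
  shows "\<exists>d>0. \<forall>y. norm (y - x) < d \<longrightarrow> norm (f y - f x - f' (y - x)) \<le> e * norm (y - x)"
  using assms by (auto simp: has_derivative_at_alt)

lemma isCont_eventually_nhds:
  assumes "isCont f x" "open S" "f x \<in> S"
  shows "eventually (\<lambda>y. f y \<in> S) (nhds x)"
proof -
  have "eventually (\<lambda>y. f y \<in> S) (at x)"
    by (rule topological_tendstoD[OF assms(1)[unfolded isCont_def] assms(2,3)])
  then show ?thesis using assms(3) by (auto simp: eventually_at_filter elim: eventually_mono)
qed

lemma funpow_fix: "F u0 = u0 \<Longrightarrow> (F ^^ n) u0 = u0"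
  by (induction n) auto

lemma funpow_der:
  assumes "(F has_derivative A) (at u0)" "F u0 = u0"
  shows "((F ^^ n) has_derivative (A ^^ n)) (at u0)"
proof (induction n)
  case 0
  then show ?case by (simp add: has_derivative_ident id_def)
next
  case (Suc n)
  have "(F \<circ> (F ^^ n) has_derivative A \<circ> (A ^^ n)) (at u0)"
    using diff_chain_at[OF Suc] assms funpow_fix[of F u0, OF assms(2)] by simp
  then show ?case by (simp add: o_def)
qed

locale chartp =
  fixes M :: "'a::euclidean_space set" and \<phi> :: "'m::euclidean_space \<Rightarrow> 'a"
    and V :: "'m set" and \<psi> :: "'a \<Rightarrow> 'm" and D :: "'m \<Rightarrow> ('m \<Rightarrow>\<^sub>L 'a)" and u0 :: 'm
  assumes V_open: "open V"
    and \<phi>_der: "\<And>u. u \<in> V \<Longrightarrow> (\<phi> has_derivative blinfun_apply (D u)) (at u)"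
    and D_cont: "continuous_on V D"
    and D_inj: "\<And>u. u \<in> V \<Longrightarrow> inj (blinfun_apply (D u))"
    and \<phi>V: "\<phi> ` V \<subseteq> M"
    and O_open: "openin (top_of_set M) (\<phi> ` V)"
    and homeo: "homeomorphism V (\<phi> ` V) \<phi> \<psi>"
    and u0V: "u0 \<in> V"
begin

abbreviation "Dp \<equiv> blinfun_apply (D u0)"

definition Pr :: "'a \<Rightarrow> 'm" where "Pr = (SOME P. linear P \<and> P \<circ> Dp = id)"

lemma Pr: "linear Pr" "\<And>w. Pr (Dp w) = w"
proof -
  have "linear Dp" using blinfun.bounded_linear_right bounded_linear.linear by blast
  then have "\<exists>P. linear P \<and> P \<circ> Dp = id"
    using linear_injective_left_inverse D_inj[OF u0V] by blast
  then have "linear Pr \<and> Pr \<circ> Dp = id" unfolding Pr_def by (rule someI_ex)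
  then show "linear Pr" "\<And>w. Pr (Dp w) = w" by (auto simp: fun_eq_iff)
qed

lemma bl_Pr: "bounded_linear Pr"
  using Pr(1) linear_conv_bounded_linear by blast

definition BP :: real where "BP = (SOME B. B > 0 \<and> (\<forall>z. norm (Pr z) \<le> B * norm z))"

lemma BP: "BP > 0" "\<And>z. norm (Pr z) \<le> BP * norm z"
proof -
  obtain B where "B > 0" "\<And>z. norm (Pr z) \<le> B * norm z" using linear_bounded_pos[OF Pr(1)] by blast
  then have "\<exists>B. B > 0 \<and> (\<forall>z. norm (Pr z) \<le> B * norm z)" by blast
  then have "BP > 0 \<and> (\<forall>z. norm (Pr z) \<le> BP * norm z)" unfolding BP_def by (rule someI_ex)
  then show "BP > 0" "\<And>z. norm (Pr z) \<le> BP * norm z" by auto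
qed

lemma Dp_below: "norm w \<le> BP * norm (Dp w)"
  using BP(2)[of "Dp w"] by (simp add: Pr(2))

lemma \<psi>\<phi>: "u \<in> V \<Longrightarrow> \<psi> (\<phi> u) = u"
  using homeo by (simp add: homeomorphism_def)

lemma \<phi>\<psi>: "y \<in> \<phi> ` V \<Longrightarrow> \<phi> (\<psi> y) = y"
  using homeo by (auto simp: homeomorphism_def)

lemma \<psi>V: "y \<in> \<phi> ` V \<Longrightarrow> \<psi> y \<in> V"
  using homeo by (auto simp: homeomorphism_def)

lemma \<psi>_cont: "continuous_on (\<phi> ` V) \<psi>"
  using homeo by (simp add: homeomorphism_def)

lemma \<phi>_cont: "continuous_on V \<phi>"
  using homeo by (simp add: homeomorphism_def)

lemma inj_\<phi>: "inj_on \<phi> V"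
  by (rule inj_on_inverseI[of V \<psi>]) (simp add: \<psi>\<phi>)

lemma eventually_in_O:
  fixes \<eta> :: "'b::real_normed_vector \<Rightarrow> 'a"
  assumes "isCont \<eta> z0" "\<eta> z0 = \<phi> u0" "eventually (\<lambda>z. \<eta> z \<in> M) (nhds z0)"
  shows "eventually (\<lambda>z. \<eta> z \<in> \<phi> ` V) (nhds z0)"
proof -
  obtain O' where O': "open O'" "\<phi> ` V = M \<inter> O'" using O_open by (auto simp: openin_open)
  have "\<phi> u0 \<in> O'" using O' u0V by auto
  have "eventually (\<lambda>z. \<eta> z \<in> O') (nhds z0)"
    using assms(1) O'(1) \<open>\<phi> u0 \<in> O'\<close> assms(2)
    by (intro isCont_eventually_nhds) auto
  with assms(3) show ?thesis
    by eventually_elim (use O' in auto)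
qed

lemma lift:
  fixes \<eta> :: "'b::real_normed_vector \<Rightarrow> 'a"
  assumes der: "(\<eta> has_derivative E) (at z0)" and eq: "\<eta> z0 = \<phi> u0"
    and evM: "eventually (\<lambda>z. \<eta> z \<in> M) (nhds z0)"
  shows "((\<lambda>z. \<psi> (\<eta> z)) has_derivative (\<lambda>w. Pr (E w))) (at z0)"
    and "\<And>w. Dp (Pr (E w)) = E w"
    and "eventually (\<lambda>z. \<eta> z \<in> \<phi> ` V) (nhds z0)"
proof -
  have blE: "bounded_linear E" using der has_derivative_bounded_linear by blast
  obtain BE where BE: "BE > 0" "\<And>w. norm (E w) \<le> BE * norm w"
    using bounded_linear.pos_bounded[OF blE] by (auto simp: mult.commute)
  have cont: "isCont \<eta> z0" using der has_derivative_continuous by blast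
  show evO: "eventually (\<lambda>z. \<eta> z \<in> \<phi> ` V) (nhds z0)"
    using eventually_in_O[OF cont eq evM] .
  then obtain d4 where d4: "d4 > 0" "\<And>z. dist z z0 < d4 \<Longrightarrow> \<eta> z \<in> \<phi> ` V"
    by (auto simp: eventually_nhds_metric)
  define \<sigma> where "\<sigma> z = \<psi> (\<eta> z)" for z
  have \<sigma>0: "\<sigma> z0 = u0" using \<psi>\<phi>[OF u0V] eq by (simp add: \<sigma>_def)
  have \<phi>\<sigma>: "\<phi> (\<sigma> z) = \<eta> z" if "dist z z0 < d4" for z
    using d4(2)[OF that] \<phi>\<psi> by (simp add: \<sigma>_def)
  obtain d2 where d2: "d2 > 0" "\<And>z. norm (z - z0) < d2 \<Longrightarrow> norm (\<eta> z - \<eta> z0 - E (z - z0)) \<le> 1 * norm (z - z0)"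
    using hd_alt_ball[OF der, of 1] by auto
  have \<eta>lip: "norm (\<eta> z - \<eta> z0) \<le> (BE + 1) * norm (z - z0)" if "norm (z - z0) < d2" for z
  proof -
    have "norm (\<eta> z - \<eta> z0) \<le> norm (\<eta> z - \<eta> z0 - E (z - z0)) + norm (E (z - z0))"
      using norm_triangle_sub[of "\<eta> z - \<eta> z0" "E (z - z0)"] by simp
    also have "\<dots> \<le> norm (z - z0) + BE * norm (z - z0)" using d2(2)[OF that] BE(2)[of "z - z0"] by simp
    finally show ?thesis by (simp add: algebra_simps)
  qed
  have \<sigma>cont: "\<exists>d>0. \<forall>z. norm (z - z0) < d \<longrightarrow> norm (\<sigma> z - u0) < e" if epos: "e > 0" for e
  proof -
    have "\<phi> u0 \<in> \<phi> ` V" using u0V by auto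
    then obtain d where d: "d > 0" "\<And>y. y \<in> \<phi> ` V \<Longrightarrow> dist y (\<phi> u0) < d \<Longrightarrow> dist (\<psi> y) (\<psi> (\<phi> u0)) < e"
      using \<psi>_cont epos unfolding continuous_on_iff by metis
    define d' where "d' = min d4 (min d2 (d / (BE + 1)))"
    have "d' > 0" using d4 d2 d BE by (simp add: d'_def)
    moreover have "norm (\<sigma> z - u0) < e" if "norm (z - z0) < d'" for z
    proof -
      have z4: "dist z z0 < d4" using that by (simp add: d'_def dist_norm)
      have "norm (\<eta> z - \<eta> z0) \<le> (BE + 1) * norm (z - z0)" using \<eta>lip that by (simp add: d'_def)
      also have "\<dots> < (BE + 1) * (d / (BE + 1))"
        using that BE by (intro mult_strict_left_mono) (auto simp: d'_def)
      also have "\<dots> = d" using BE by simp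
      finally have "dist (\<eta> z) (\<phi> u0) < d" using eq by (simp add: dist_norm)
      from d(2)[OF d4(2)[OF z4] this] show ?thesis
        using \<psi>\<phi>[OF u0V] by (simp add: \<sigma>_def dist_norm)
    qed
    ultimately show ?thesis by blast
  qed
  have \<phi>der0: "(\<phi> has_derivative Dp) (at u0)" using \<phi>_der[OF u0V] .
  define K where "K = 2 * BP * (BE + 1)"
  have K: "K > 0" using BP BE by (simp add: K_def)
  obtain d1 where d1: "d1 > 0" "\<And>u. norm (u - u0) < d1 \<Longrightarrow> norm (\<phi> u - \<phi> u0 - Dp (u - u0)) \<le> (1 / (2 * BP)) * norm (u - u0)"
    using hd_alt_ball[OF \<phi>der0, of "1 / (2 * BP)"] BP by auto
  obtain d5 where d5: "d5 > 0" "\<And>z. norm (z - z0) < d5 \<Longrightarrow> norm (\<sigma> z - u0) < d1"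
    using \<sigma>cont[OF d1(1)] by auto
  have \<sigma>lip: "norm (\<sigma> z - u0) \<le> K * norm (z - z0)"
    if "norm (z - z0) < d4" "norm (z - z0) < d5" "norm (z - z0) < d2" for z
  proof -
    have a: "norm (\<phi> (\<sigma> z) - \<phi> u0 - Dp (\<sigma> z - u0)) \<le> (1 / (2 * BP)) * norm (\<sigma> z - u0)"
      using d1(2) d5(2) that by blast
    have "\<phi> (\<sigma> z) = \<eta> z" using \<phi>\<sigma> that by (simp add: dist_norm)
    have "norm (Dp (\<sigma> z - u0)) \<le> norm (\<phi> (\<sigma> z) - \<phi> u0) + norm (Dp (\<sigma> z - u0) - (\<phi> (\<sigma> z) - \<phi> u0))"
      by (rule norm_triangle_sub)
    also have "norm (Dp (\<sigma> z - u0) - (\<phi> (\<sigma> z) - \<phi> u0)) = norm (\<phi> (\<sigma> z) - \<phi> u0 - Dp (\<sigma> z - u0))"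
      by (rule norm_minus_commute)
    finally have b: "norm (Dp (\<sigma> z - u0)) \<le> norm (\<eta> z - \<eta> z0) + (1 / (2 * BP)) * norm (\<sigma> z - u0)"
      using a \<open>\<phi> (\<sigma> z) = \<eta> z\<close> eq by simp
    have "norm (\<sigma> z - u0) \<le> BP * norm (Dp (\<sigma> z - u0))" by (rule Dp_below)
    also have "\<dots> \<le> BP * (norm (\<eta> z - \<eta> z0) + (1 / (2 * BP)) * norm (\<sigma> z - u0))"
      using b BP(1) by (simp add: mult_left_mono)
    finally have "norm (\<sigma> z - u0) \<le> BP * (norm (\<eta> z - \<eta> z0) + (1 / (2 * BP)) * norm (\<sigma> z - u0))" .
    then have "norm (\<sigma> z - u0) \<le> 2 * BP * norm (\<eta> z - \<eta> z0)"
      using BP(1) by (simp add: algebra_simps)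
    also have "\<dots> \<le> 2 * BP * ((BE + 1) * norm (z - z0))"
      using \<eta>lip[OF that(3)] BP(1) by simp
    finally show ?thesis by (simp add: K_def algebra_simps)
  qed
  show "((\<lambda>z. \<psi> (\<eta> z)) has_derivative (\<lambda>w. Pr (E w))) (at z0)"
    unfolding has_derivative_at_alt
  proof (intro conjI allI impI)
    show "bounded_linear (\<lambda>w. Pr (E w))"
      using bounded_linear_compose[OF bl_Pr blE] .
    fix e :: real assume e: "e > 0"
    obtain da where da: "da > 0" "\<And>z. norm (z - z0) < da \<Longrightarrow> norm (\<eta> z - \<eta> z0 - E (z - z0)) \<le> (e / (2 * BP)) * norm (z - z0)"
      using hd_alt_ball[OF der, of "e / (2 * BP)"] e BP by auto
    obtain db where db: "db > 0" "\<And>u. norm (u - u0) < db \<Longrightarrow> norm (\<phi> u - \<phi> u0 - Dp (u - u0)) \<le> (e / (2 * BP * K)) * norm (u - u0)"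
      using hd_alt_ball[OF \<phi>der0, of "e / (2 * BP * K)"] e BP K by auto
    obtain dc where dc: "dc > 0" "\<And>z. norm (z - z0) < dc \<Longrightarrow> norm (\<sigma> z - u0) < db"
      using \<sigma>cont[OF db(1)] by auto
    define d where "d = min (min d4 d5) (min d2 (min da dc))"
    have "d > 0" using d4 d5 d2 da dc by (simp add: d_def)
    moreover have "norm (\<psi> (\<eta> z) - \<psi> (\<eta> z0) - Pr (E (z - z0))) \<le> e * norm (z - z0)"
      if "norm (z - z0) < d" for z
    proof -
      have zs: "norm (z - z0) < d4" "norm (z - z0) < d5" "norm (z - z0) < d2" "norm (z - z0) < da" "norm (z - z0) < dc"
        using that by (auto simp: d_def)
      have e1: "\<phi> (\<sigma> z) = \<eta> z" using \<phi>\<sigma> zs by (simp add: dist_norm)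
      have "\<psi> (\<eta> z) - \<psi> (\<eta> z0) - Pr (E (z - z0)) = Pr (Dp (\<sigma> z - u0)) - Pr (E (z - z0))"
        using \<sigma>0 by (simp add: Pr(2) \<sigma>_def)
      also have "\<dots> = Pr ((\<eta> z - \<eta> z0 - E (z - z0)) - (\<phi> (\<sigma> z) - \<phi> u0 - Dp (\<sigma> z - u0)))"
        using e1 eq linear_diff[OF Pr(1)] by (simp add: algebra_simps)
      finally have "norm (\<psi> (\<eta> z) - \<psi> (\<eta> z0) - Pr (E (z - z0)))
          \<le> BP * norm ((\<eta> z - \<eta> z0 - E (z - z0)) - (\<phi> (\<sigma> z) - \<phi> u0 - Dp (\<sigma> z - u0)))"
        using BP(2) by simp
      also have "\<dots> \<le> BP * (norm (\<eta> z - \<eta> z0 - E (z - z0)) + norm (\<phi> (\<sigma> z) - \<phi> u0 - Dp (\<sigma> z - u0)))"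
        using BP(1) norm_triangle_ineq4 by (intro mult_left_mono) auto
      also have "\<dots> \<le> BP * ((e / (2 * BP)) * norm (z - z0) + (e / (2 * BP * K)) * norm (\<sigma> z - u0))"
        using da(2)[OF zs(4)] db(2)[OF dc(2)[OF zs(5)]] BP(1) by (intro mult_left_mono add_mono) auto
      also have "\<dots> \<le> BP * ((e / (2 * BP)) * norm (z - z0) + (e / (2 * BP * K)) * (K * norm (z - z0)))"
        using \<sigma>lip[OF zs(1-3)] BP(1) K e by (intro mult_left_mono add_mono) (auto intro: mult_left_mono)
      also have "\<dots> = e * norm (z - z0)" using BP(1) K by (simp add: field_simps)
      finally show ?thesis .
    qed
    ultimately show "\<exists>d>0. \<forall>y. norm (y - z0) < d \<longrightarrow> norm (\<psi> (\<eta> y) - \<psi> (\<eta> z0) - Pr (E (y - z0))) \<le> e * norm (y - z0)"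
      by blast
  qed
  then have \<sigma>der: "(\<sigma> has_derivative (\<lambda>w. Pr (E w))) (at z0)" by (simp add: \<sigma>_def [abs_def])
  have "(\<phi> \<circ> \<sigma> has_derivative Dp \<circ> (\<lambda>w. Pr (E w))) (at z0)"
    using diff_chain_at[OF \<sigma>der] \<phi>der0 \<sigma>0 by simp
  then have "(\<eta> has_derivative Dp \<circ> (\<lambda>w. Pr (E w))) (at z0)"
    by (rule has_derivative_transform_within_open[where s="ball z0 d4"])
       (use d4 \<phi>\<sigma> in \<open>auto simp: dist_commute\<close>)
  then have "E = Dp \<circ> (\<lambda>w. Pr (E w))" using has_derivative_unique[OF der] by blast
  then show "\<And>w. Dp (Pr (E w)) = E w" by (metis comp_apply)
qed


lemma linear_Dp: "linear Dp"
  using blinfun.bounded_linear_right bounded_linear.linear by blast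

lemma tcurve: "tangent_curve M (\<phi> u0) (Dp w) (\<lambda>t. \<phi> (u0 + t *\<^sub>R w))"
proof -
  obtain r where r: "r > 0" "ball u0 r \<subseteq> V" using V_open u0V open_contains_ball by blast
  define e where "e = r / (norm w + 1)"
  have e: "e > 0" using r unfolding e_def by (intro divide_pos_pos) (auto intro: add_nonneg_pos)
  have inV: "u0 + t *\<^sub>R w \<in> V" if "t \<in> {-e<..<e}" for t
  proof -
    have "norm (t *\<^sub>R w) = \<bar>t\<bar> * norm w" by simp
    also have "\<dots> \<le> \<bar>t\<bar> * (norm w + 1)" by (simp add: mult_left_mono)
    also have "\<dots> < e * (norm w + 1)" using that by (intro mult_strict_right_mono) (auto intro: add_nonneg_pos)
    also have "\<dots> = r" unfolding e_def using norm_ge_zero[of w] by (simp del: norm_ge_zero)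
    finally show ?thesis using r(2) by (auto simp: dist_norm)
  qed
  have der: "((\<lambda>t. \<phi> (u0 + t *\<^sub>R w)) has_derivative (\<lambda>s. blinfun_apply (D (u0 + t *\<^sub>R w)) (s *\<^sub>R w))) (at t)"
    if "u0 + t *\<^sub>R w \<in> V" for t
  proof -
    have l: "((\<lambda>t. u0 + t *\<^sub>R w) has_derivative (\<lambda>s. s *\<^sub>R w)) (at t)"
      by (auto intro!: derivative_eq_intros)
    show ?thesis using diff_chain_at[OF l \<phi>_der[OF that]] by (simp add: o_def)
  qed
  have "C1_map_on {-e<..<e} (\<lambda>t. \<phi> (u0 + t *\<^sub>R w))"
    unfolding C1_map_on_def
  proof (intro exI[of _ "\<lambda>t. D (u0 + t *\<^sub>R w) o\<^sub>L blinfun_scaleR_left w"] conjI ballI)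
    fix t assume "t \<in> {-e<..<e}"
    then show "((\<lambda>t. \<phi> (u0 + t *\<^sub>R w)) has_derivative blinfun_apply (D (u0 + t *\<^sub>R w) o\<^sub>L blinfun_scaleR_left w)) (at t)"
    proof -
      have "blinfun_apply (D (u0 + t *\<^sub>R w) o\<^sub>L blinfun_scaleR_left w) = (\<lambda>s. blinfun_apply (D (u0 + t *\<^sub>R w)) (s *\<^sub>R w))"
        by (auto simp: fun_eq_iff blinfun_scaleR_left.rep_eq)
      then show ?thesis using der[OF inV[OF \<open>t \<in> {-e<..<e}\<close>]] by simp
    qed
  next
    have "continuous_on {-e<..<e} (\<lambda>t. D (u0 + t *\<^sub>R w))"
      by (rule continuous_on_compose2[OF D_cont]) (auto intro!: continuous_intros simp: inV)
    then show "continuous_on {-e<..<e} (\<lambda>t. D (u0 + t *\<^sub>R w) o\<^sub>L blinfun_scaleR_left w)"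
      by (auto intro!: continuous_intros)
  qed
  moreover have "(\<lambda>t. \<phi> (u0 + t *\<^sub>R w)) ` {-e<..<e} \<subseteq> M" using inV \<phi>V by blast
  moreover have "((\<lambda>t. \<phi> (u0 + t *\<^sub>R w)) has_vector_derivative Dp w) (at 0)"
    unfolding has_vector_derivative_def using der[of 0] u0V
    by (simp add: linear_cmul[OF linear_Dp])
  ultimately show ?thesis unfolding tangent_curve_def using e by auto
qed

lemma Dp_tangent: "Dp w \<in> tangent_space M (\<phi> u0)"
  unfolding tangent_space_def using tcurve by blast

lemma tmap:
  assumes hM: "h ` M \<subseteq> M" and hp: "h (\<phi> u0) = \<phi> u0"
    and hder: "((\<lambda>u. h (\<phi> u)) has_derivative Bh) (at u0)"
    and v: "v \<in> tangent_space M (\<phi> u0)"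
  shows "tangent_map M h (\<phi> u0) v = Bh (Pr v)"
proof -
  have key: "((h \<circ> \<gamma>) has_vector_derivative Bh (Pr v)) (at 0)" if tc: "tangent_curve M (\<phi> u0) v \<gamma>" for \<gamma>
  proof -
    obtain e where e: "e > 0" "\<gamma> ` {-e<..<e} \<subseteq> M" and g0: "\<gamma> 0 = \<phi> u0"
      and gd: "(\<gamma> has_vector_derivative v) (at 0)"
      using tc unfolding tangent_curve_def by blast
    have gd': "(\<gamma> has_derivative (\<lambda>s. s *\<^sub>R v)) (at 0)" using gd by (simp add: has_vector_derivative_def)
    have evM: "eventually (\<lambda>t. \<gamma> t \<in> M) (nhds 0)"
      unfolding eventually_nhds_metric using e by (intro exI[of _ e]) (force simp: dist_norm)
    note L = lift[OF gd' g0 evM]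
    obtain d where d: "d > 0" "\<And>t. dist t 0 < d \<Longrightarrow> \<gamma> t \<in> \<phi> ` V"
      using L(3) by (auto simp: eventually_nhds_metric)
    have s0: "\<psi> (\<gamma> 0) = u0" using g0 \<psi>\<phi>[OF u0V] by simp
    have "((\<lambda>u. h (\<phi> u)) \<circ> (\<lambda>t. \<psi> (\<gamma> t)) has_derivative Bh \<circ> (\<lambda>s. Pr (s *\<^sub>R v))) (at 0)"
      using diff_chain_at[OF L(1)] hder s0 by simp
    then have "((h \<circ> \<gamma>) has_derivative Bh \<circ> (\<lambda>s. Pr (s *\<^sub>R v))) (at 0)"
      by (rule has_derivative_transform_within_open[where s="ball 0 d"])
         (use d \<phi>\<psi> in \<open>auto simp: dist_commute\<close>)
    moreover have "bounded_linear Bh" using hder has_derivative_bounded_linear by blast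
    ultimately show ?thesis unfolding has_vector_derivative_def
      using linear_cmul[OF Pr(1)] linear_cmul[OF bounded_linear.linear[OF \<open>bounded_linear Bh\<close>]] by (simp add: o_def)
  qed
  obtain \<gamma> where \<gamma>: "tangent_curve M (\<phi> u0) v \<gamma>" using v unfolding tangent_space_def by blast
  show ?thesis unfolding tangent_map_def
  proof (rule the_equality)
    show "\<exists>\<gamma>. tangent_curve M (\<phi> u0) v \<gamma> \<and> ((h \<circ> \<gamma>) has_vector_derivative Bh (Pr v)) (at 0)"
      using \<gamma> key by blast
    fix w' assume "\<exists>\<gamma>. tangent_curve M (\<phi> u0) v \<gamma> \<and> ((h \<circ> \<gamma>) has_vector_derivative w') (at 0)"
    then obtain \<gamma>' where "tangent_curve M (\<phi> u0) v \<gamma>'" "((h \<circ> \<gamma>') has_vector_derivative w') (at 0)" by blast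
    then show "w' = Bh (Pr v)" using key vector_derivative_unique_at by blast
  qed
qed

lemma Fder:
  assumes hM: "h ` M \<subseteq> M" and hp: "h (\<phi> u0) = \<phi> u0"
    and hder: "((\<lambda>u. h (\<phi> u)) has_derivative Bh) (at u0)"
  shows "((\<lambda>u. \<psi> (h (\<phi> u))) has_derivative (\<lambda>w. Pr (Bh w))) (at u0)"
    and "\<And>w. Dp (Pr (Bh w)) = Bh w"
    and "eventually (\<lambda>u. h (\<phi> u) \<in> \<phi> ` V) (nhds u0)"
proof -
  have evM: "eventually (\<lambda>u. h (\<phi> u) \<in> M) (nhds u0)"
    using V_open u0V \<phi>V hM by (auto simp: eventually_nhds intro!: exI[of _ V])
  note L = lift[OF hder _ evM, simplified hp]
  show "((\<lambda>u. \<psi> (h (\<phi> u))) has_derivative (\<lambda>w. Pr (Bh w))) (at u0)"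
    and "\<And>w. Dp (Pr (Bh w)) = Bh w"
    and "eventually (\<lambda>u. h (\<phi> u) \<in> \<phi> ` V) (nhds u0)" using L by auto
qed


lemma Dp_bound: obtains BD where "BD > 0" "\<And>z. norm (Dp z) \<le> BD * norm z"
  using linear_bounded_pos[OF linear_Dp] by blast

lemma contraction:
  assumes hM: "h ` M \<subseteq> M" and hp: "h (\<phi> u0) = \<phi> u0"
    and hder: "((\<lambda>u. h (\<phi> u)) has_derivative Bh) (at u0)"
    and mu: "0 < \<mu>" "\<mu> < 1"
    and contr: "\<And>m w. norm (Dp (((\<lambda>w. Pr (Bh w)) ^^ m) w)) \<le> C * \<mu> ^ m * norm (Dp w)"
  shows "\<exists>U a. a > 0 \<and> openin (top_of_set M) U \<and> \<phi> u0 \<in> U \<and>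
           (\<forall>e>0. \<exists>N. \<forall>n\<ge>N. \<forall>y\<in>U. dist ((h ^^ (a * n)) y) (\<phi> u0) < e)"
proof -
  define A where "A = (\<lambda>w. Pr (Bh w))"
  define F where "F u = \<psi> (h (\<phi> u))" for u
  note FD = Fder[OF hM hp hder]
  have Fd: "(F has_derivative A) (at u0)" using FD(1) by (simp add: F_def[abs_def] A_def)
  have F0: "F u0 = u0" using hp \<psi>\<phi>[OF u0V] by (simp add: F_def)
  obtain BD where BD: "BD > 0" "\<And>z. norm (Dp z) \<le> BD * norm z" using Dp_bound by blast
  have pos4: "0 < 1 / (4 * (\<bar>C\<bar> + 1))" by (simp add: add_nonneg_pos)
  obtain m1 where m1: "\<mu> ^ m1 < 1 / (4 * (\<bar>C\<bar> + 1))"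
    using real_arch_pow_inv[OF pos4 mu(2)] by blast
  define m0 where "m0 = Suc m1"
  have m0: "m0 > 0" by (simp add: m0_def)
  have Cm0: "C * \<mu> ^ m0 \<le> 1 / 4"
  proof -
    have "\<mu> ^ m0 \<le> \<mu> ^ m1" unfolding m0_def using mu by (simp add: mult_left_le_one_le)
    have "C * \<mu> ^ m0 \<le> (\<bar>C\<bar> + 1) * \<mu> ^ m0" using mu by (intro mult_right_mono) auto
    also have "\<dots> \<le> (\<bar>C\<bar> + 1) * \<mu> ^ m1" using \<open>\<mu> ^ m0 \<le> \<mu> ^ m1\<close> by (intro mult_left_mono) auto
    also have "\<dots> \<le> (\<bar>C\<bar> + 1) * (1 / (4 * (\<bar>C\<bar> + 1)))" using m1 by (intro mult_left_mono) auto
    also have "\<dots> = 1 / 4" by (simp add: add_nonneg_pos)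
    finally show ?thesis .
  qed
  define G where "G = F ^^ m0"
  have Gd: "(G has_derivative (A ^^ m0)) (at u0)" unfolding G_def using funpow_der[OF Fd F0] .
  have G0: "G u0 = u0" unfolding G_def using funpow_fix[of F u0, OF F0] .
  have Am0: "norm (Dp ((A ^^ m0) w)) \<le> 1/4 * norm (Dp w)" for w
  proof -
    have "norm (Dp ((A ^^ m0) w)) \<le> C * \<mu> ^ m0 * norm (Dp w)" using contr by (simp add: A_def)
    also have "\<dots> \<le> 1/4 * norm (Dp w)" using Cm0 by (intro mult_right_mono) auto
    finally show ?thesis .
  qed
  obtain r where r: "r > 0" "\<And>u. dist u u0 < r \<Longrightarrow> u \<in> V \<and> h (\<phi> u) \<in> \<phi> ` V"
  proof -
    have "eventually (\<lambda>u. u \<in> V) (nhds u0)" using V_open u0V eventually_nhds by blast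
    with FD(3) have "eventually (\<lambda>u. u \<in> V \<and> h (\<phi> u) \<in> \<phi> ` V) (nhds u0)"
      by eventually_elim auto
    then show ?thesis using that by (auto simp: eventually_nhds_metric)
  qed
  have Fgood: "\<phi> (F u) = h (\<phi> u)" "F u \<in> V" if "dist u u0 < r" for u
    using r(2)[OF that] \<phi>\<psi> \<psi>V by (auto simp: F_def)
  have ev1: "eventually (\<lambda>u. \<forall>j\<in>{..<m0}. (F ^^ j) u \<in> ball u0 r) (nhds u0)"
  proof (rule eventually_ball_finite)
    show "\<forall>j\<in>{..<m0}. eventually (\<lambda>u. (F ^^ j) u \<in> ball u0 r) (nhds u0)"
    proof
      fix j
      have "isCont (F ^^ j) u0" using funpow_der[OF Fd F0, of j] has_derivative_continuous by blast
      then show "eventually (\<lambda>u. (F ^^ j) u \<in> ball u0 r) (nhds u0)"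
        using funpow_fix[of F u0, OF F0, of j] r(1) by (intro isCont_eventually_nhds) auto
    qed
  qed simp
  have iter_ok: "\<phi> ((F ^^ j) u) = (h ^^ j) (\<phi> u)"
    if "\<forall>j\<in>{..<m0}. (F ^^ j) u \<in> ball u0 r" "j \<le> m0" for u j
    using that(2)
  proof (induction j)
    case 0 then show ?case by simp
  next
    case (Suc j)
    then have "dist ((F ^^ j) u) u0 < r" using that(1) by (auto simp: dist_commute)
    then have "\<phi> (F ((F ^^ j) u)) = h (\<phi> ((F ^^ j) u))" by (rule Fgood)
    then show ?case using Suc by simp
  qed
  define \<epsilon> where "\<epsilon> = 1 / (4 * BP * BD)"
  have \<epsilon>: "\<epsilon> > 0" using BP BD by (simp add: \<epsilon>_def)
  obtain d2 where d2: "d2 > 0" "\<And>u. norm (u - u0) < d2 \<Longrightarrow> norm (G u - G u0 - (A ^^ m0) (u - u0)) \<le> \<epsilon> * norm (u - u0)"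
    using hd_alt_ball[OF Gd \<epsilon>] by blast
  obtain d1 where d1: "d1 > 0" "\<And>u. dist u u0 < d1 \<Longrightarrow> \<forall>j\<in>{..<m0}. (F ^^ j) u \<in> ball u0 r"
    using ev1 by (auto simp: eventually_nhds_metric)
  define \<delta> where "\<delta> = min d1 d2"
  have \<delta>: "\<delta> > 0" using d1 d2 by (simp add: \<delta>_def)
  have lin_Am0: "linear (A ^^ m0)" using Gd has_derivative_bounded_linear bounded_linear.linear by blast
  have Gstep: "norm (Dp (G u - u0)) \<le> 1/2 * norm (Dp (u - u0))" "\<phi> (G u) = (h ^^ m0) (\<phi> u)" "u \<in> V"
    if "norm (u - u0) < \<delta>" for u
  proof -
    have u1: "dist u u0 < d1" "norm (u - u0) < d2" using that by (auto simp: \<delta>_def dist_norm)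
    have rem: "norm (G u - u0 - (A ^^ m0) (u - u0)) \<le> \<epsilon> * norm (u - u0)" using d2(2)[OF u1(2)] G0 by simp
    have "Dp (G u - u0) = Dp ((A ^^ m0) (u - u0)) + Dp (G u - u0 - (A ^^ m0) (u - u0))"
      using linear_diff[OF linear_Dp] by simp
    then have "norm (Dp (G u - u0)) \<le> norm (Dp ((A ^^ m0) (u - u0))) + norm (Dp (G u - u0 - (A ^^ m0) (u - u0)))"
      by (metis norm_triangle_ineq)
    also have "\<dots> \<le> 1/4 * norm (Dp (u - u0)) + BD * (\<epsilon> * norm (u - u0))"
      using Am0[of "u - u0"] BD(2)[of "G u - u0 - (A ^^ m0) (u - u0)"] rem BD(1)
      by (intro add_mono) (auto intro: order_trans mult_left_mono)
    also have "\<dots> \<le> 1/4 * norm (Dp (u - u0)) + BD * (\<epsilon> * (BP * norm (Dp (u - u0))))"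
      using Dp_below BD(1) \<epsilon> by (intro add_mono mult_left_mono) auto
    also have "\<dots> = 1/2 * norm (Dp (u - u0))" using BP(1) BD(1) by (simp add: \<epsilon>_def field_simps)
    finally show "norm (Dp (G u - u0)) \<le> 1/2 * norm (Dp (u - u0))" .
    show "\<phi> (G u) = (h ^^ m0) (\<phi> u)" unfolding G_def using iter_ok[OF d1(2)[OF u1(1)]] by simp
    have "(F ^^ 0) u \<in> ball u0 r" using d1(2)[OF u1(1)] m0 by blast
    then show "u \<in> V" using r(2)[of u] by (auto simp: dist_commute)
  qed
  define \<rho> where "\<rho> = \<delta> / BP"
  have \<rho>: "\<rho> > 0" using \<delta> BP by (simp add: \<rho>_def)
  define Ub where "Ub = {u. norm (Dp (u - u0)) < \<rho>}"
  have inUb: "norm (u - u0) < \<delta>" if "u \<in> Ub" for u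
  proof -
    have "norm (u - u0) \<le> BP * norm (Dp (u - u0))" by (rule Dp_below)
    also have "\<dots> < BP * \<rho>" using that BP(1) by (simp add: Ub_def)
    also have "\<dots> = \<delta>" using BP(1) by (simp add: \<rho>_def)
    finally show ?thesis .
  qed
  have UbV: "Ub \<subseteq> V" using Gstep(3) inUb by blast
  have u0Ub: "u0 \<in> Ub" using \<rho> by (simp add: Ub_def)
  have Ub_open: "open Ub"
  proof -
    have "continuous_on UNIV (\<lambda>u. norm (Dp (u - u0)))"
      using linear_continuous_on[OF linear_conv_bounded_linear[THEN iffD1, OF linear_Dp]]
      by (intro continuous_intros)
    then show ?thesis unfolding Ub_def using open_Collect_less[of "\<lambda>u. norm (Dp (u - u0))" "\<lambda>_. \<rho>"]
      by (simp add: continuous_on_const)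
  qed
  have iterG: "(G ^^ n) u \<in> Ub \<and> norm (Dp ((G ^^ n) u - u0)) \<le> (1/2) ^ n * norm (Dp (u - u0))
      \<and> \<phi> ((G ^^ n) u) = (h ^^ (m0 * n)) (\<phi> u)" if "u \<in> Ub" for u n
  proof (induction n)
    case 0 then show ?case using that by simp
  next
    case (Suc n)
    let ?v = "(G ^^ n) u"
    have v: "norm (?v - u0) < \<delta>" using Suc inUb by blast
    have a: "norm (Dp (G ?v - u0)) \<le> (1/2) ^ Suc n * norm (Dp (u - u0))"
      using Gstep(1)[OF v] Suc by simp
    have "norm (Dp (?v - u0)) < \<rho>" using Suc by (simp add: Ub_def)
    then have b: "G ?v \<in> Ub" using Gstep(1)[OF v] norm_ge_zero[of "Dp (G ?v - u0)"]
      unfolding Ub_def mem_Collect_eq by linarith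
    have "\<phi> (G ?v) = (h ^^ m0) ((h ^^ (m0 * n)) (\<phi> u))" using Gstep(2)[OF v] Suc by simp
    also have "\<dots> = (h ^^ (m0 * Suc n)) (\<phi> u)" by (simp add: funpow_add)
    finally show ?case using a b by simp
  qed
  define U where "U = \<phi> ` Ub"
  have "openin (top_of_set (\<phi> ` V)) U"
    unfolding U_def using homeomorphism_imp_open_map[OF homeo open_subset[OF UbV Ub_open]] .
  then have Uopen: "openin (top_of_set M) U" using O_open openin_trans by blast
  have unif: "\<exists>N. \<forall>n\<ge>N. \<forall>y\<in>U. dist ((h ^^ (m0 * n)) y) (\<phi> u0) < e" if e: "e > 0" for e
  proof -
    obtain \<eta> where \<eta>: "\<eta> > 0" "\<And>u. u \<in> V \<Longrightarrow> dist u u0 < \<eta> \<Longrightarrow> dist (\<phi> u) (\<phi> u0) < e"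
      using \<phi>_cont u0V e unfolding continuous_on_iff by metis
    obtain N where N: "(1/2::real) ^ N < \<eta> / (BP * \<rho>)"
      using real_arch_pow_inv[of "\<eta> / (BP * \<rho>)" "1/2::real"] \<eta> BP \<rho> by auto
    have "dist ((h ^^ (m0 * n)) y) (\<phi> u0) < e" if "n \<ge> N" "y \<in> U" for n y
    proof -
      obtain u where u: "u \<in> Ub" "y = \<phi> u" using \<open>y \<in> U\<close> by (auto simp: U_def)
      note I = iterG[OF u(1), of n]
      have "norm ((G ^^ n) u - u0) \<le> BP * norm (Dp ((G ^^ n) u - u0))" by (rule Dp_below)
      also have "\<dots> \<le> BP * ((1/2) ^ n * norm (Dp (u - u0)))" using I BP(1) by (intro mult_left_mono) auto
      also have "\<dots> \<le> BP * ((1/2) ^ N * \<rho>)"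
      proof -
        have p: "(1/2::real) ^ n \<le> (1/2) ^ N" using \<open>n \<ge> N\<close> by (rule power_decreasing) auto
        have "norm (Dp (u - u0)) \<le> \<rho>" using u(1) by (simp add: Ub_def)
        then have "(1/2) ^ n * norm (Dp (u - u0)) \<le> (1/2) ^ N * \<rho>"
          using p by (intro mult_mono) auto
        then show ?thesis using BP(1) by simp
      qed
      also have "\<dots> < BP * (\<eta> / (BP * \<rho>) * \<rho>)"
        using N BP(1) \<rho> by (intro mult_strict_left_mono mult_strict_right_mono) auto
      also have "\<dots> = \<eta>" using BP(1) \<rho> by simp
      finally have "dist ((G ^^ n) u) u0 < \<eta>" by (simp add: dist_norm)
      then have "dist (\<phi> ((G ^^ n) u)) (\<phi> u0) < e" using \<eta>(2) I UbV by blast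
      then show ?thesis using I u by simp
    qed
    then show ?thesis by blast
  qed
  show ?thesis
    using m0 Uopen u0Ub unif by (intro exI[of _ U] exI[of _ m0]) (auto simp: U_def)
qed


lemma iter_der:
  assumes fM: "f ` M \<subseteq> M" and fp: "f (\<phi> u0) = \<phi> u0"
    and fder: "((\<lambda>u. f (\<phi> u)) has_derivative Bf) (at u0)"
  shows "\<exists>B. ((\<lambda>u. (f ^^ n) (\<phi> u)) has_derivative B) (at u0)"
proof (induction n)
  case 0
  show ?case using \<phi>_der[OF u0V] by auto
next
  case (Suc n)
  then obtain Bn where Bn: "((\<lambda>u. (f ^^ n) (\<phi> u)) has_derivative Bn) (at u0)" by blast
  have fnM: "(f ^^ j) ` M \<subseteq> M" for j by (induction j) (use fM in auto)
  have fnp: "(f ^^ n) (\<phi> u0) = \<phi> u0" using funpow_fix[of f "\<phi> u0", OF fp] .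
  have evM: "eventually (\<lambda>u. (f ^^ n) (\<phi> u) \<in> M) (nhds u0)"
    using V_open u0V \<phi>V fnM[of n] by (auto simp: eventually_nhds intro!: exI[of _ V])
  note L = lift[OF Bn fnp evM]
  obtain d where d: "d > 0" "\<And>u. dist u u0 < d \<Longrightarrow> (f ^^ n) (\<phi> u) \<in> \<phi> ` V"
    using L(3) by (auto simp: eventually_nhds_metric)
  have s0: "\<psi> ((f ^^ n) (\<phi> u0)) = u0" using fnp \<psi>\<phi>[OF u0V] by simp
  have "((\<lambda>u. f (\<phi> u)) \<circ> (\<lambda>u. \<psi> ((f ^^ n) (\<phi> u))) has_derivative Bf \<circ> (\<lambda>w. Pr (Bn w))) (at u0)"
    using diff_chain_at[OF L(1)] fder s0 by simp
  then have "((\<lambda>u. (f ^^ Suc n) (\<phi> u)) has_derivative Bf \<circ> (\<lambda>w. Pr (Bn w))) (at u0)"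
    by (rule has_derivative_transform_within_open[where s="ball u0 d"])
       (use d \<phi>\<psi> in \<open>auto simp: dist_commute\<close>)
  then show ?case by blast
qed

lemma tmap_iter:
  assumes hM: "h ` M \<subseteq> M" and hp: "h (\<phi> u0) = \<phi> u0"
    and hder: "((\<lambda>u. h (\<phi> u)) has_derivative Bh) (at u0)"
  shows "(tangent_map M h (\<phi> u0) ^^ m) (Dp w) = Dp (((\<lambda>w. Pr (Bh w)) ^^ m) w)"
proof (induction m)
  case 0 then show ?case by simp
next
  case (Suc m)
  have "(tangent_map M h (\<phi> u0) ^^ Suc m) (Dp w) = tangent_map M h (\<phi> u0) (Dp (((\<lambda>w. Pr (Bh w)) ^^ m) w))"
    using Suc by simp
  also have "\<dots> = Bh (Pr (Dp (((\<lambda>w. Pr (Bh w)) ^^ m) w)))"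
    by (rule tmap[OF hM hp hder Dp_tangent])
  also have "\<dots> = Dp (Pr (Bh (((\<lambda>w. Pr (Bh w)) ^^ m) w)))"
    using Fder(2)[OF hM hp hder] Pr(2) by simp
  finally show ?case by simp
qed

lemma inverse_der:
  assumes h1M: "h1 ` M \<subseteq> M" and h1p: "h1 (\<phi> u0) = \<phi> u0"
    and h2M: "h2 ` M \<subseteq> M" and h2p: "h2 (\<phi> u0) = \<phi> u0"
    and inv: "\<And>y. y \<in> M \<Longrightarrow> h2 (h1 y) = y"
    and d1: "((\<lambda>u. h1 (\<phi> u)) has_derivative B1) (at u0)"
    and d2: "((\<lambda>u. h2 (\<phi> u)) has_derivative B2) (at u0)"
  shows "(\<lambda>w. Pr (B2 w)) \<circ> (\<lambda>w. Pr (B1 w)) = id"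
proof -
  note F1 = Fder[OF h1M h1p d1] and F2 = Fder[OF h2M h2p d2]
  have s0: "\<psi> (h1 (\<phi> u0)) = u0" using h1p \<psi>\<phi>[OF u0V] by simp
  have c: "((\<lambda>u. \<psi> (h2 (\<phi> u))) \<circ> (\<lambda>u. \<psi> (h1 (\<phi> u))) has_derivative (\<lambda>w. Pr (B2 w)) \<circ> (\<lambda>w. Pr (B1 w))) (at u0)"
    using diff_chain_at[OF F1(1)] F2(1) s0 by simp
  have "eventually (\<lambda>u. u \<in> V) (nhds u0)" using V_open u0V eventually_nhds by blast
  with F1(3) have "eventually (\<lambda>u. u \<in> V \<and> h1 (\<phi> u) \<in> \<phi> ` V) (nhds u0)"
    by eventually_elim auto
  then obtain d where d: "d > 0" "\<And>u. dist u u0 < d \<Longrightarrow> u \<in> V \<and> h1 (\<phi> u) \<in> \<phi> ` V"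
    by (auto simp: eventually_nhds_metric)
  have "(id has_derivative (\<lambda>w. Pr (B2 w)) \<circ> (\<lambda>w. Pr (B1 w))) (at u0)"
  proof (rule has_derivative_transform_within_open[OF c, where s="ball u0 d"])
    fix u assume "u \<in> ball u0 d"
    then have u: "u \<in> V" "h1 (\<phi> u) \<in> \<phi> ` V" using d(2) by (auto simp: dist_commute)
    have "\<phi> u \<in> M" using u \<phi>V by auto
    then show "((\<lambda>u. \<psi> (h2 (\<phi> u))) \<circ> (\<lambda>u. \<psi> (h1 (\<phi> u)))) u = id u"
      using u \<phi>\<psi> inv \<psi>\<phi> by simp
  qed (use d in auto)
  moreover have "(id has_derivative id) (at u0)" by (simp add: has_derivative_ident id_def)
  ultimately show ?thesis using has_derivative_unique by metis
qed

lemma sink_local: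
  assumes fM: "f ` M \<subseteq> M" and fp: "f (\<phi> u0) = \<phi> u0"
    and fder: "((\<lambda>u. f (\<phi> u)) has_derivative Bf) (at u0)"
    and k: "k > 0" and hs: "hyperbolic_splitting M f (\<phi> u0) k Es {0}"
  shows "\<exists>U a. a > 0 \<and> openin (top_of_set M) U \<and> \<phi> u0 \<in> U \<and>
           (\<forall>e>0. \<exists>N. \<forall>n\<ge>N. \<forall>y\<in>U. dist ((f ^^ (a * n)) y) (\<phi> u0) < e)"
proof -
  define h where "h = f ^^ k"
  have hM: "h ` M \<subseteq> M" unfolding h_def by (induction k) (use fM in auto)
  have hp: "h (\<phi> u0) = \<phi> u0" unfolding h_def using funpow_fix[of f "\<phi> u0", OF fp] .
  obtain Bh where hder: "((\<lambda>u. h (\<phi> u)) has_derivative Bh) (at u0)"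
    using iter_der[OF fM fp fder] unfolding h_def by blast
  define L where "L = tangent_map M h (\<phi> u0)"
  have hs': "subspace Es \<and> subspace ({0}::'a set) \<and> Es \<inter> {0} = {0} \<and>
      {a + b | a b. a \<in> Es \<and> b \<in> {0}} = tangent_space M (\<phi> u0) \<and>
      L ` Es \<subseteq> Es \<and> L ` {0} \<subseteq> {0} \<and>
      (\<exists>C \<mu>. C > 0 \<and> 0 < \<mu> \<and> \<mu> < 1 \<and>
         (\<forall>m. \<forall>v\<in>Es. norm ((L ^^ m) v) \<le> C * \<mu> ^ m * norm v) \<and>
         (\<forall>m. \<forall>v\<in>{0}. norm v \<le> C * \<mu> ^ m * norm ((L ^^ m) v)))"
    using hs unfolding hyperbolic_splitting_def Let_def L_def h_def by blast
  then obtain C \<mu> where Cmu: "C > 0" "0 < \<mu>" "\<mu> < 1"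
    and bnd': "\<forall>m. \<forall>v\<in>Es. norm ((L ^^ m) v) \<le> C * \<mu> ^ m * norm v"
    and span: "{a + b | a b. a \<in> Es \<and> b \<in> {0}} = tangent_space M (\<phi> u0)"
    by (elim conjE exE) (rule that; assumption)
  have bnd: "\<And>m v. v \<in> Es \<Longrightarrow> norm ((L ^^ m) v) \<le> C * \<mu> ^ m * norm v" using bnd' by blast
  have inEs: "Dp w \<in> Es" for w
  proof -
    have "Dp w \<in> {a + b | a b. a \<in> Es \<and> b \<in> {0}}" using span Dp_tangent by blast
    then show ?thesis by auto
  qed
  have contr: "norm (Dp (((\<lambda>w. Pr (Bh w)) ^^ m) w)) \<le> C * \<mu> ^ m * norm (Dp w)" for m w
    using bnd[OF inEs[of w], of m] tmap_iter[OF hM hp hder, of m w] by (simp add: L_def)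
  obtain U a where Ua: "a > 0" "openin (top_of_set M) U" "\<phi> u0 \<in> U"
    "\<forall>e>0. \<exists>N. \<forall>n\<ge>N. \<forall>y\<in>U. dist ((h ^^ (a * n)) y) (\<phi> u0) < e"
    using contraction[OF hM hp hder Cmu(2,3) contr] by blast
  have "(h ^^ (a * n)) = f ^^ ((k * a) * n)" for n unfolding h_def by (simp add: funpow_mult mult.assoc)
  then show ?thesis using Ua k by (intro exI[of _ U] exI[of _ "k * a"]) auto
qed

lemma source_local:
  assumes fM: "f ` M \<subseteq> M" and fp: "f (\<phi> u0) = \<phi> u0"
    and gM: "g ` M \<subseteq> M" and gp: "g (\<phi> u0) = \<phi> u0"
    and inv: "\<And>y. y \<in> M \<Longrightarrow> g (f y) = y"
    and fder: "((\<lambda>u. f (\<phi> u)) has_derivative Bf) (at u0)"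
    and gder: "((\<lambda>u. g (\<phi> u)) has_derivative Bg) (at u0)"
    and k: "k > 0" and hs: "hyperbolic_splitting M f (\<phi> u0) k {0} Eu"
  shows "\<exists>U a. a > 0 \<and> openin (top_of_set M) U \<and> \<phi> u0 \<in> U \<and>
           (\<forall>e>0. \<exists>N. \<forall>n\<ge>N. \<forall>y\<in>U. dist ((g ^^ (a * n)) y) (\<phi> u0) < e)"
proof -
  define h where "h = f ^^ k"
  define h' where "h' = g ^^ k"
  have hM: "h ` M \<subseteq> M" unfolding h_def by (induction k) (use fM in auto)
  have hp: "h (\<phi> u0) = \<phi> u0" unfolding h_def using funpow_fix[of f "\<phi> u0", OF fp] .
  have h'M: "h' ` M \<subseteq> M" unfolding h'_def by (induction k) (use gM in auto)
  have h'p: "h' (\<phi> u0) = \<phi> u0" unfolding h'_def using funpow_fix[of g "\<phi> u0", OF gp] .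
  have hinv: "h' (h y) = y" if "y \<in> M" for y
    unfolding h_def h'_def using that
  proof (induction k arbitrary: y)
    case 0 then show ?case by simp
  next
    case (Suc k)
    have "(g ^^ Suc k) ((f ^^ Suc k) y) = (g ^^ k) (g (f ((f ^^ k) y)))"
      by (simp only: funpow_Suc_right[of k g] funpow.simps(2)[of k f] o_def)
    also have "\<dots> = (g ^^ k) ((f ^^ k) y)"
    proof -
      have "(f ^^ k) y \<in> M" using Suc.prems fM by (induction k) auto
      then show ?thesis using inv by simp
    qed
    also have "\<dots> = y" using Suc by blast
    finally show ?case .
  qed
  obtain Bh where hder: "((\<lambda>u. h (\<phi> u)) has_derivative Bh) (at u0)"
    using iter_der[OF fM fp fder] unfolding h_def by blast
  obtain Bh' where h'der: "((\<lambda>u. h' (\<phi> u)) has_derivative Bh') (at u0)"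
    using iter_der[OF gM gp gder] unfolding h'_def by blast
  define A where "A = (\<lambda>w. Pr (Bh w))"
  define A' where "A' = (\<lambda>w. Pr (Bh' w))"
  have A'A: "A' \<circ> A = id" unfolding A_def A'_def by (rule inverse_der[OF hM hp h'M h'p hinv hder h'der])
  have linA: "linear A" unfolding A_def
    using Fder(1)[OF hM hp hder] has_derivative_bounded_linear bounded_linear.linear by blast
  have linA': "linear A'" unfolding A'_def
    using Fder(1)[OF h'M h'p h'der] has_derivative_bounded_linear bounded_linear.linear by blast
  have AA': "A \<circ> A' = id" using A'A linear_inverse_left[OF linA linA'] by blast
  have AmA'm: "(A ^^ m) ((A' ^^ m) w) = w" for m w
  proof (induction m arbitrary: w)
    case 0 then show ?case by simp
  next
    case (Suc m)
    have "(A ^^ Suc m) ((A' ^^ Suc m) w) = (A ^^ m) (A (A' ((A' ^^ m) w)))"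
      by (simp only: funpow_Suc_right[of m A] funpow.simps(2)[of m A'] o_def)
    also have "\<dots> = (A ^^ m) ((A' ^^ m) w)" using AA' by (simp add: fun_eq_iff)
    finally show ?case using Suc by simp
  qed
  define L where "L = tangent_map M h (\<phi> u0)"
  have hs': "subspace ({0}::'a set) \<and> subspace Eu \<and> {0} \<inter> Eu = {0} \<and>
      {a + b | a b. a \<in> {0} \<and> b \<in> Eu} = tangent_space M (\<phi> u0) \<and>
      L ` {0} \<subseteq> {0} \<and> L ` Eu \<subseteq> Eu \<and>
      (\<exists>C \<mu>. C > 0 \<and> 0 < \<mu> \<and> \<mu> < 1 \<and>
         (\<forall>m. \<forall>v\<in>{0}. norm ((L ^^ m) v) \<le> C * \<mu> ^ m * norm v) \<and>
         (\<forall>m. \<forall>v\<in>Eu. norm v \<le> C * \<mu> ^ m * norm ((L ^^ m) v)))"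
    using hs unfolding hyperbolic_splitting_def Let_def L_def h_def by blast
  then obtain C \<mu> where Cmu: "C > 0" "0 < \<mu>" "\<mu> < 1"
    and bnd': "\<forall>m. \<forall>v\<in>Eu. norm v \<le> C * \<mu> ^ m * norm ((L ^^ m) v)"
    and span: "{a + b | a b. a \<in> {0} \<and> b \<in> Eu} = tangent_space M (\<phi> u0)"
    by (elim conjE exE) (rule that; assumption)
  have bnd: "\<And>m v. v \<in> Eu \<Longrightarrow> norm v \<le> C * \<mu> ^ m * norm ((L ^^ m) v)" using bnd' by blast
  have inEu: "Dp w \<in> Eu" for w
  proof -
    have "Dp w \<in> {a + b | a b. a \<in> {0} \<and> b \<in> Eu}" using span Dp_tangent by blast
    then show ?thesis by auto
  qed
  have contr: "norm (Dp ((A' ^^ m) w)) \<le> C * \<mu> ^ m * norm (Dp w)" for m w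
  proof -
    have "norm (Dp ((A' ^^ m) w)) \<le> C * \<mu> ^ m * norm ((L ^^ m) (Dp ((A' ^^ m) w)))"
      using bnd[OF inEu] by blast
    also have "(L ^^ m) (Dp ((A' ^^ m) w)) = Dp ((A ^^ m) ((A' ^^ m) w))"
      unfolding L_def A_def by (rule tmap_iter[OF hM hp hder])
    also have "\<dots> = Dp w" using AmA'm by simp
    finally show ?thesis .
  qed
  obtain U a where Ua: "a > 0" "openin (top_of_set M) U" "\<phi> u0 \<in> U"
    "\<forall>e>0. \<exists>N. \<forall>n\<ge>N. \<forall>y\<in>U. dist ((h' ^^ (a * n)) y) (\<phi> u0) < e"
  proof -
    have c2: "\<And>m w. norm (Dp (((\<lambda>w. Pr (Bh' w)) ^^ m) w)) \<le> C * \<mu> ^ m * norm (Dp w)"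
      using contr unfolding A'_def .
    show ?thesis using contraction[OF h'M h'p h'der Cmu(2,3) c2] that by blast
  qed
  have "(h' ^^ (a * n)) = g ^^ ((k * a) * n)" for n unfolding h'_def by (simp add: funpow_mult mult.assoc)
  then show ?thesis using Ua k by (intro exI[of _ U] exI[of _ "k * a"]) auto
qed

end

lemma funpow_M: "h ` M \<subseteq> M \<Longrightarrow> (h ^^ n) ` M \<subseteq> M"
  by (induction n) auto

lemma funpow_M': "h ` M \<subseteq> M \<Longrightarrow> y \<in> M \<Longrightarrow> (h ^^ n) y \<in> M"
  using funpow_M by blast

lemma funpow_cont: "continuous_on M h \<Longrightarrow> h ` M \<subseteq> M \<Longrightarrow> continuous_on M (h ^^ n)"
proof (induction n)
  case 0 then show ?case by (simp add: continuous_on_id)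
next
  case (Suc n)
  have "continuous_on M (h \<circ> (h ^^ n))"
    using continuous_on_compose[OF Suc.IH[OF Suc.prems] continuous_on_subset[OF Suc.prems(1) funpow_M[OF Suc.prems(2), of n]]] .
  then show ?case by simp
qed

lemma stable_conv:
  assumes "y \<in> stable_set M h p" "h p = p"
  shows "(\<lambda>n. (h ^^ n) y) \<longlonglongrightarrow> p"
proof -
  have "(\<lambda>n. dist ((h ^^ n) y) ((h ^^ n) p)) \<longlonglongrightarrow> 0"
    using assms(1) by (simp add: stable_set_def)
  then have "(\<lambda>n. dist ((h ^^ n) y) p) \<longlonglongrightarrow> 0"
    using funpow_fix[of h p, OF assms(2)] by simp
  then show ?thesis by (rule tendsto_dist_iff[THEN iffD2])
qed

lemma stable_setI:
  assumes "y \<in> M" "h p = p" "(\<lambda>n. (h ^^ n) y) \<longlonglongrightarrow> p"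
  shows "y \<in> stable_set M h p"
proof -
  have "(\<lambda>n. dist ((h ^^ n) y) p) \<longlonglongrightarrow> 0" using assms(3) by (rule tendsto_dist_iff[THEN iffD1])
  then have "(\<lambda>n. dist ((h ^^ n) y) ((h ^^ n) p)) \<longlonglongrightarrow> 0"
    using funpow_fix[of h p, OF assms(2)] by simp
  then show ?thesis using assms(1) by (simp add: stable_set_def)
qed

lemma uniform_compact_aux:
  assumes hM: "h ` M \<subseteq> M" and hc: "continuous_on M h" and hp: "h p = p"
    and U: "openin (top_of_set M) U" "p \<in> U"
    and unif: "\<forall>e>0. \<exists>N. \<forall>n\<ge>N. \<forall>y\<in>U. dist ((h ^^ n) y) p < e"
  obtains W where "\<And>n. open (W n)" "\<And>n. {z \<in> M. (h ^^ n) z \<in> U} = M \<inter> W n"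
    and "\<And>y. y \<in> stable_set M h p \<Longrightarrow> \<exists>n. y \<in> M \<inter> W n"
    and "\<And>n z. z \<in> M \<inter> W n \<Longrightarrow> z \<in> stable_set M h p"
proof -
  have "\<forall>n. \<exists>W. open W \<and> {z \<in> M. (h ^^ n) z \<in> U} = M \<inter> W"
  proof
    fix n
    have "openin (top_of_set M) (M \<inter> (h ^^ n) -` U)"
      using continuous_openin_preimage[OF funpow_cont[OF hc hM] _ U(1)] funpow_M[OF hM] by blast
    then obtain W where "open W" "M \<inter> (h ^^ n) -` U = M \<inter> W" by (auto simp: openin_open)
    then show "\<exists>W. open W \<and> {z \<in> M. (h ^^ n) z \<in> U} = M \<inter> W" by blast
  qed
  then obtain W where W: "\<And>n. open (W n)" "\<And>n. {z \<in> M. (h ^^ n) z \<in> U} = M \<inter> W n" by metis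
  have a: "\<exists>n. y \<in> M \<inter> W n" if "y \<in> stable_set M h p" for y
  proof -
    obtain U' where U': "open U'" "U = M \<inter> U'" using U(1) by (auto simp: openin_open)
    have "eventually (\<lambda>n. (h ^^ n) y \<in> U') sequentially"
      using stable_conv[OF that hp] U' U(2) by (auto intro: topological_tendstoD)
    then obtain n where "(h ^^ n) y \<in> U'" using eventually_sequentially by auto
    moreover have "y \<in> M" using that by (simp add: stable_set_def)
    ultimately have "y \<in> {z \<in> M. (h ^^ n) z \<in> U}" using U' funpow_M'[OF hM] by auto
    then show ?thesis using W(2) by blast
  qed
  have b: "z \<in> stable_set M h p" if "z \<in> M \<inter> W n" for n z
  proof -
    have z: "z \<in> M" "(h ^^ n) z \<in> U" using that W(2)[of n] by auto
    have "(\<lambda>m. (h ^^ m) z) \<longlonglongrightarrow> p"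
    proof (rule LIMSEQ_I)
      fix e :: real assume "e > 0"
      then obtain N where N: "\<And>m y. m \<ge> N \<Longrightarrow> y \<in> U \<Longrightarrow> dist ((h ^^ m) y) p < e" using unif by blast
      have "norm ((h ^^ m) z - p) < e" if "m \<ge> N + n" for m
      proof -
        have "m = (m - n) + n" using that by simp
        then have "(h ^^ m) z = (h ^^ ((m - n) + n)) z" by simp
        also have "\<dots> = (h ^^ (m - n)) ((h ^^ n) z)" by (simp add: funpow_add)
        finally have "(h ^^ m) z = (h ^^ (m - n)) ((h ^^ n) z)" .
        then show ?thesis using N[of "m - n" "(h ^^ n) z"] z(2) that by (simp add: dist_norm)
      qed
      then show "\<exists>no. \<forall>m\<ge>no. norm ((h ^^ m) z - p) < e" by blast
    qed
    then show ?thesis using stable_setI[of z M h p, OF z(1) hp] by blast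
  qed
  show ?thesis by (rule that[of W, OF W(1) W(2) a b])
qed

lemma stable_open:
  assumes hM: "h ` M \<subseteq> M" and hc: "continuous_on M h" and hp: "h p = p"
    and U: "openin (top_of_set M) U" "p \<in> U"
    and unif: "\<forall>e>0. \<exists>N. \<forall>n\<ge>N. \<forall>y\<in>U. dist ((h ^^ n) y) p < e"
  shows "openin (top_of_set M) (stable_set M h p)"
proof -
  obtain W where W: "\<And>n. open (W n)" and W2: "\<And>n. {z \<in> M. (h ^^ n) z \<in> U} = M \<inter> W n"
    and a: "\<And>y. y \<in> stable_set M h p \<Longrightarrow> \<exists>n. y \<in> M \<inter> W n"
    and b: "\<And>n z. z \<in> M \<inter> W n \<Longrightarrow> z \<in> stable_set M h p"
    by (rule uniform_compact_aux[OF assms]) blast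
  have eq: "stable_set M h p = M \<inter> (\<Union>n. W n)"
  proof (intro equalityI subsetI)
    fix y assume "y \<in> stable_set M h p"
    then obtain n where "y \<in> M \<inter> W n" using a by blast
    then show "y \<in> M \<inter> (\<Union>n. W n)" by blast
  next
    fix y assume "y \<in> M \<inter> (\<Union>n. W n)"
    then obtain n where "y \<in> M \<inter> W n" by blast
    then show "y \<in> stable_set M h p" by (rule b)
  qed
  have "open (\<Union>n. W n)" using W by (intro open_UN) auto
  then show ?thesis unfolding openin_open using eq by blast
qed

lemma uniform_compact:
  assumes hM: "h ` M \<subseteq> M" and hc: "continuous_on M h" and hp: "h p = p"
    and U: "openin (top_of_set M) U" "p \<in> U"
    and unif: "\<forall>e>0. \<exists>N. \<forall>n\<ge>N. \<forall>y\<in>U. dist ((h ^^ n) y) p < e"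
    and K: "compact K" "K \<subseteq> stable_set M h p"
  shows "\<forall>e>0. \<exists>N. \<forall>n\<ge>N. \<forall>y\<in>K. dist ((h ^^ n) y) p < e"
proof -
  obtain W where W: "\<And>n. open (W n)" "\<And>n. {z \<in> M. (h ^^ n) z \<in> U} = M \<inter> W n"
    and a: "\<And>y. y \<in> stable_set M h p \<Longrightarrow> \<exists>n. y \<in> M \<inter> W n"
    and b: "\<And>n z. z \<in> M \<inter> W n \<Longrightarrow> z \<in> stable_set M h p"
    by (rule uniform_compact_aux[OF assms(1-6)]) blast
  have "K \<subseteq> \<Union> (W ` UNIV)" using a K(2) by blast
  then obtain C where C: "finite C" "K \<subseteq> \<Union> (W ` C)"
    using compactE_image[OF K(1), of UNIV W] W(1) by metis
  show ?thesis
  proof (intro allI impI)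
    fix e :: real assume "e > 0"
    then obtain N where N: "\<And>m y. m \<ge> N \<Longrightarrow> y \<in> U \<Longrightarrow> dist ((h ^^ m) y) p < e" using unif by blast
    have "dist ((h ^^ n) y) p < e" if nN: "n \<ge> N + Max C" and yK: "y \<in> K" for n y
    proof -
      obtain j where j: "j \<in> C" "y \<in> W j" using C(2) yK by blast
      have "y \<in> M" using K(2) that(2) by (auto simp: stable_set_def)
      then have hj: "(h ^^ j) y \<in> U" using W(2)[of j] j by blast
      have "j \<le> Max C" using C(1) j(1) by simp
      then have "n = (n - j) + j" using that(1) by simp
      then have "(h ^^ n) y = (h ^^ ((n - j) + j)) y" by simp
      also have "\<dots> = (h ^^ (n - j)) ((h ^^ j) y)" by (simp add: funpow_add)
      finally have "(h ^^ n) y = (h ^^ (n - j)) ((h ^^ j) y)" .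
      then show ?thesis using N[of "n - j", OF _ hj] that(1) \<open>j \<le> Max C\<close> by simp
    qed
    then show "\<exists>N. \<forall>n\<ge>N. \<forall>y\<in>K. dist ((h ^^ n) y) p < e" by blast
  qed
qed

lemma lift_mult:
  assumes hM: "h ` M \<subseteq> M" and hc: "continuous_on M h" and hp: "h p = p" and pM: "p \<in> M"
    and a: "a > 0" and UM: "U \<subseteq> M"
    and unif: "\<forall>e>0. \<exists>N. \<forall>n\<ge>N. \<forall>y\<in>U. dist ((h ^^ (a * n)) y) p < e"
  shows "\<forall>e>0. \<exists>N. \<forall>n\<ge>N. \<forall>y\<in>U. dist ((h ^^ n) y) p < e"
proof (intro allI impI)
  fix e :: real assume e: "e > 0"
  have "\<forall>j\<in>{..<a}. \<exists>d. d > 0 \<and> (\<forall>z\<in>M. dist z p < d \<longrightarrow> dist ((h ^^ j) z) p < e)"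
  proof
    fix j
    have "continuous_on M (h ^^ j)" using funpow_cont[OF hc hM] .
    then obtain d where "d > 0" "\<forall>z\<in>M. dist z p < d \<longrightarrow> dist ((h ^^ j) z) ((h ^^ j) p) < e"
      using pM e unfolding continuous_on_iff by metis
    then show "\<exists>d. d > 0 \<and> (\<forall>z\<in>M. dist z p < d \<longrightarrow> dist ((h ^^ j) z) p < e)"
      using funpow_fix[of h p, OF hp] by auto
  qed
  then obtain d where d: "\<And>j. j \<in> {..<a} \<Longrightarrow> d j > 0 \<and> (\<forall>z\<in>M. dist z p < d j \<longrightarrow> dist ((h ^^ j) z) p < e)"
    using finite_set_choice[of "{..<a}"] by (metis finite_lessThan)
  define d0 where "d0 = Min (d ` {..<a})"
  have d0: "d0 > 0" unfolding d0_def using d a by (subst Min_gr_iff) auto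
  have d0le: "d0 \<le> d j" if "j < a" for j using that by (auto simp: d0_def)
  obtain N0 where N0: "\<And>n y. n \<ge> N0 \<Longrightarrow> y \<in> U \<Longrightarrow> dist ((h ^^ (a * n)) y) p < d0"
    using unif d0 by blast
  have "dist ((h ^^ n) y) p < e" if "n \<ge> a * N0" "y \<in> U" for n y
  proof -
    have "(a * N0) div a \<le> n div a" by (rule div_le_mono[OF that(1)])
    then have q: "n div a \<ge> N0" using a by simp
    have j: "n mod a < a" using a by simp
    have "(h ^^ n) y = (h ^^ (n mod a + a * (n div a))) y" by simp
    also have "\<dots> = (h ^^ (n mod a)) ((h ^^ (a * (n div a))) y)" by (simp only: funpow_add o_def)
    finally have "(h ^^ n) y = (h ^^ (n mod a)) ((h ^^ (a * (n div a))) y)" .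
    moreover have "(h ^^ (a * (n div a))) y \<in> M" using funpow_M'[OF hM] UM that(2) by blast
    moreover have "dist ((h ^^ (a * (n div a))) y) p < d (n mod a)"
      using N0[OF q that(2)] d0le[OF j] by simp
    ultimately show ?thesis using d[of "n mod a"] j by auto
  qed
  then show "\<exists>N. \<forall>n\<ge>N. \<forall>y\<in>U. dist ((h ^^ n) y) p < e" by blast
qed

lemma fixed_from_stable:
  assumes hM: "h ` M \<subseteq> M" and k: "k > 0" "(h ^^ k) p = p"
    and y1: "(\<lambda>n. dist ((h ^^ n) y) ((h ^^ n) p)) \<longlonglongrightarrow> 0"
    and y2: "(\<lambda>n. dist ((h ^^ n) (h y)) ((h ^^ n) p)) \<longlonglongrightarrow> 0"
  shows "h p = p"
proof -
  define d where "d n = dist ((h ^^ Suc n) p) ((h ^^ n) p)" for n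
  have y1': "(\<lambda>n. dist ((h ^^ Suc n) y) ((h ^^ Suc n) p)) \<longlonglongrightarrow> 0"
    using LIMSEQ_Suc[OF y1] .
  have "d n \<le> dist ((h ^^ Suc n) y) ((h ^^ Suc n) p) + dist ((h ^^ n) (h y)) ((h ^^ n) p)" for n
  proof -
    have "(h ^^ Suc n) y = (h ^^ n) (h y)" by (simp add: funpow_Suc_right del: funpow.simps)
    then show ?thesis unfolding d_def by (metis dist_commute dist_triangle)
  qed
  moreover have "(\<lambda>n. dist ((h ^^ Suc n) y) ((h ^^ Suc n) p) + dist ((h ^^ n) (h y)) ((h ^^ n) p)) \<longlonglongrightarrow> 0"
    using tendsto_add[OF y1' y2] by simp
  ultimately have dlim: "d \<longlonglongrightarrow> 0"
    by (intro real_tendsto_sandwich[of "\<lambda>_. 0" d sequentially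
          "\<lambda>n. dist ((h ^^ Suc n) y) ((h ^^ Suc n) p) + dist ((h ^^ n) (h y)) ((h ^^ n) p)"])
       (auto simp: d_def)
  have per: "(h ^^ (k * n)) p = p" for n
    by (induction n) (use k in \<open>auto simp: funpow_add simp del: funpow.simps\<close>)
  have "d (k * n) = d 0" for n
  proof -
    have "(h ^^ Suc (k * n)) p = h ((h ^^ (k * n)) p)" by simp
    then show ?thesis unfolding d_def using per by simp
  qed
  moreover have "(\<lambda>n. d (k * n)) \<longlonglongrightarrow> 0"
    using LIMSEQ_subseq_LIMSEQ[OF dlim, of "\<lambda>n. k * n"] k(1) by (simp add: strict_mono_def o_def)
  ultimately have "(\<lambda>n. d 0) \<longlonglongrightarrow> 0" by simp
  then have "d 0 = 0" by (simp add: LIMSEQ_const_iff)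
  then show ?thesis by (simp add: d_def)
qed

lemma chart_obtain:
  fixes M :: "'a::euclidean_space set"
  assumes "submanifold_without_boundary TYPE('m) M" "y \<in> M"
  obtains \<phi> :: "'m::euclidean_space \<Rightarrow> 'a" and V \<psi> D u0 where "chartp M \<phi> V \<psi> D u0" "\<phi> u0 = y" "chart_param M \<phi> V"
proof -
  obtain \<phi> :: "'m \<Rightarrow> 'a" and V where cp: "chart_param M \<phi> V" "y \<in> \<phi> ` V"
    using assms unfolding submanifold_without_boundary_def by blast
  then obtain u0 where u0: "u0 \<in> V" "\<phi> u0 = y" by blast
  from cp(1) obtain D \<psi> where "open V" "\<forall>u\<in>V. (\<phi> has_derivative blinfun_apply (D u)) (at u)"
    "continuous_on V D" "\<forall>u\<in>V. inj (blinfun_apply (D u))" "\<phi> ` V \<subseteq> M"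
    "openin (top_of_set M) (\<phi> ` V)" "homeomorphism V (\<phi> ` V) \<phi> \<psi>"
    unfolding chart_param_def by blast
  then have "chartp M \<phi> V \<psi> D u0" using u0 by unfold_locales auto
  then show ?thesis using that u0 cp by blast
qed

lemma C1_der:
  fixes M :: "'a::euclidean_space set" and \<phi> :: "'m::euclidean_space \<Rightarrow> 'a"
  assumes "C1_on_manifold TYPE('m) M f" "chart_param M \<phi> V" "u \<in> V"
  shows "\<exists>B. ((\<lambda>u. f (\<phi> u)) has_derivative B) (at u)"
proof -
  have "C1_map_on V (f \<circ> \<phi>)" using assms(1,2) unfolding C1_on_manifold_def by blast
  then show ?thesis using assms(3) unfolding C1_map_on_def o_def by blast
qed

lemma C1_cont:
  fixes M :: "'a::euclidean_space set"
  assumes sm: "submanifold_without_boundary TYPE('m::euclidean_space) M"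
    and C1: "C1_on_manifold TYPE('m) M f"
  shows "continuous_on M f"
  unfolding continuous_on_eq_continuous_within
proof
  fix y assume "y \<in> M"
  then obtain \<phi> :: "'m \<Rightarrow> 'a" and V \<psi> D u0 where ch: "chartp M \<phi> V \<psi> D u0" "\<phi> u0 = y" "chart_param M \<phi> V"
    using chart_obtain[OF sm] by metis
  interpret chartp M \<phi> V \<psi> D u0 by (rule ch(1))
  have "continuous_on V (\<lambda>u. f (\<phi> u))"
  proof (rule continuous_at_imp_continuous_on, rule ballI)
    fix u assume "u \<in> V"
    then obtain B where "((\<lambda>u. f (\<phi> u)) has_derivative B) (at u)" using C1_der[OF C1 ch(3)] by blast
    then show "isCont (\<lambda>u. f (\<phi> u)) u" using has_derivative_continuous by blast
  qed
  then have "continuous_on (\<phi> ` V) ((\<lambda>u. f (\<phi> u)) \<circ> \<psi>)"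
    using continuous_on_compose[OF \<psi>_cont] homeo by (simp add: homeomorphism_def)
  moreover have "((\<lambda>u. f (\<phi> u)) \<circ> \<psi>) z = f z" if "z \<in> \<phi> ` V" for z using that \<phi>\<psi> by simp
  ultimately have c: "continuous_on (\<phi> ` V) f" using continuous_on_cong by (metis (no_types, lifting))
  have yO: "y \<in> \<phi> ` V" using ch(2) u0V by blast
  obtain O' where O': "open O'" "\<phi> ` V = M \<inter> O'" using O_open by (auto simp: openin_open)
  have "continuous (at y within \<phi> ` V) f" using c yO continuous_on_eq_continuous_within by blast
  moreover have "at y within M = at y within \<phi> ` V"
    by (rule at_within_nhd[of y O']) (use O' yO in auto)
  ultimately show "continuous (at y within M) f" by simp
qed

lemma hausdist_Un_le:
  fixes K B :: "'a::metric_space set"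
  assumes "K \<noteq> {}" "e \<ge> 0" "\<And>b. b \<in> B \<Longrightarrow> \<exists>z\<in>K. dist b z \<le> e"
  shows "hausdist (K \<union> B) K \<le> e" "0 \<le> hausdist (K \<union> B) K"
proof -
  have s1: "(SUP a\<in>K \<union> B. infdist a K) \<le> e"
  proof (rule cSUP_least)
    show "K \<union> B \<noteq> {}" using assms(1) by blast
    fix a assume "a \<in> K \<union> B"
    then show "infdist a K \<le> e"
    proof
      assume "a \<in> K" then show ?thesis using assms(2) by (simp add: infdist_zero)
    next
      assume "a \<in> B"
      then obtain z where "z \<in> K" "dist a z \<le> e" using assms(3) by blast
      then show ?thesis using infdist_le[of z K a] by linarith
    qed
  qed
  have s2: "(SUP b\<in>K. infdist b (K \<union> B)) = 0"
  proof -
    have "(SUP b\<in>K. infdist b (K \<union> B)) = (SUP b\<in>K. (0::real))"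
      by (rule SUP_cong) (auto simp: infdist_zero)
    also have "\<dots> = 0" using assms(1) by (rule cSUP_const)
    finally show ?thesis .
  qed
  show "hausdist (K \<union> B) K \<le> e" using s1 s2 assms(2) by (simp add: hausdist_def)
  show "0 \<le> hausdist (K \<union> B) K" using s2 by (simp add: hausdist_def)
qed

lemma find_arc_out:
  fixes M :: "'a::euclidean_space set" and \<phi> :: "'m::euclidean_space \<Rightarrow> 'a"
  assumes ch: "chartp M \<phi> V \<psi> D u1" and x: "\<phi> u1 = x"
    and dim: "DIM('m) \<ge> 2"
    and W: "openin (top_of_set M) W" "x \<in> W"
    and xP: "x \<in> P"
    and PC: "P \<subseteq> \<Union>\<C>" and cC: "countable \<C>"
    and arcs: "\<And>C. C \<in> \<C> \<Longrightarrow> (\<exists>z. C = {z}) \<or>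
                 (\<exists>c. continuous_on {0..1::real} c \<and> inj_on c {0..1} \<and> C = c ` {0..1})"
  shows "\<exists>\<alpha>. continuous_on {0..1::real} \<alpha> \<and> inj_on \<alpha> {0..1} \<and> \<alpha> 0 = x \<and>
             \<alpha> ` {0..1} \<subseteq> W \<and> \<alpha> 1 \<notin> P"
proof -
  interpret chartp M \<phi> V \<psi> D u1 by (rule ch)
  define V' where "V' = V \<inter> \<phi> -` W"
  have "openin (top_of_set V) V'"
    unfolding V'_def using continuous_openin_preimage[OF \<phi>_cont _ W(1)] \<phi>V by blast
  then have "open V'" using V_open openin_open_trans by blast
  moreover have "u1 \<in> V'" using u0V x W(2) by (simp add: V'_def)
  ultimately obtain r where r: "r > 0" "cball u1 r \<subseteq> V'" using open_contains_cball by blast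
  define S where "S = cball u1 r"
  have SV: "S \<subseteq> V" using r(2) by (auto simp: S_def V'_def)
  have SW: "\<phi> ` S \<subseteq> W" using r(2) by (auto simp: S_def V'_def)
  define E where "E C = S \<inter> \<phi> -` C" for C
  have compC: "compact C" if "C \<in> \<C>" for C
    using arcs[OF that] compact_continuous_image[of "{0..1::real}"] by auto
  have Eclosed: "closed (E C)" if "C \<in> \<C>" for C
  proof -
    have "closedin (top_of_set S) (S \<inter> \<phi> -` C)"
      using continuous_closedin_preimage[OF continuous_on_subset[OF \<phi>_cont SV]] compC[OF that]
      compact_imp_closed by blast
    then show ?thesis unfolding E_def using closedin_closed_trans[of S] by (simp add: S_def)
  qed
  define G where "G = (\<lambda>C. S - E C) ` \<C>"
  have dense: "S \<subseteq> closure (S - E C)" if C: "C \<in> \<C>" for C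
  proof
    fix z assume zS: "z \<in> S"
    show "z \<in> closure (S - E C)"
    proof (rule ccontr)
      assume "z \<notin> closure (S - E C)"
      then obtain \<epsilon> where \<epsilon>: "\<epsilon> > 0" "\<And>y. y \<in> S - E C \<Longrightarrow> \<not> dist y z < \<epsilon>"
        unfolding closure_approachable by blast
      define Ob where "Ob = ball z \<epsilon> \<inter> ball u1 r"
      have Oopen: "open Ob" unfolding Ob_def by (intro open_Int open_ball)
      have "z \<in> closure (ball u1 r)" using zS r(1) by (simp add: S_def closure_ball)
      then obtain y0 where "y0 \<in> ball u1 r" "dist y0 z < \<epsilon>" using \<epsilon>(1) unfolding closure_approachable by blast
      then have "y0 \<in> Ob" unfolding Ob_def by (simp add: dist_commute)
      then have One: "Ob \<noteq> {}" by blast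
      have OS: "Ob \<subseteq> S" by (auto simp: Ob_def S_def)
      have OE: "Ob \<subseteq> E C"
      proof
        fix y assume "y \<in> Ob"
        then have "y \<in> S" "dist y z < \<epsilon>" using OS by (auto simp: Ob_def dist_commute)
        then show "y \<in> E C" using \<epsilon>(2) by blast
      qed
      have \<phi>OC: "\<phi> ` Ob \<subseteq> C" using OE by (auto simp: E_def)
      have injO: "inj_on \<phi> Ob" using inj_\<phi> OS SV inj_on_subset by blast
      have contO: "continuous_on Ob \<phi>" using \<phi>_cont OS SV continuous_on_subset by blast
      from arcs[OF C] show False
      proof
        assume "\<exists>z. C = {z}"
        then obtain z' where "C = {z'}" by blast
        obtain o1 where o1: "o1 \<in> Ob" using One by blast
        have "Ob = {o1}"
        proof
          show "Ob \<subseteq> {o1}"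
          proof
            fix o2 assume "o2 \<in> Ob"
            then have "\<phi> o2 = \<phi> o1" using \<phi>OC o1 \<open>C = {z'}\<close> by blast
            then show "o2 \<in> {o1}" using injO o1 \<open>o2 \<in> Ob\<close> inj_onD by fastforce
          qed
        qed (use o1 in auto)
        then show False using Oopen not_open_singleton by metis
      next
        assume "\<exists>c. continuous_on {0..1::real} c \<and> inj_on c {0..1} \<and> C = c ` {0..1}"
        then obtain c where c: "continuous_on {0..1::real} c" "inj_on c {0..1}" "C = c ` {0..1}" by blast
        define ci where "ci = inv_into {0..1::real} c"
        have ci_cont: "continuous_on C ci"
          unfolding ci_def c(3) by (rule continuous_on_inv[OF c(1)]) (auto simp: c(2))
        have cci: "c (ci y) = y" if "y \<in> C" for y using that c(3) by (simp add: ci_def f_inv_into_f)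
        have "continuous_on Ob (ci \<circ> \<phi>)"
          by (rule continuous_on_compose[OF contO continuous_on_subset[OF ci_cont \<phi>OC]])
        moreover have "inj_on (ci \<circ> \<phi>) Ob"
        proof (rule inj_onI)
          fix a b assume ab: "a \<in> Ob" "b \<in> Ob" "(ci \<circ> \<phi>) a = (ci \<circ> \<phi>) b"
          then have "c (ci (\<phi> a)) = c (ci (\<phi> b))" by simp
          moreover have "\<phi> a \<in> C" "\<phi> b \<in> C" using \<phi>OC ab(1,2) by auto
          ultimately have "\<phi> a = \<phi> b" using cci by metis
          then show "a = b" using injO ab(1,2) inj_onD by metis
        qed
        ultimately have "DIM('m) \<le> DIM(real)"
          using invariance_of_dimension[OF _ Oopen _ One] by blast
        then show False using dim by simp
      qed
    qed
  qed
  have Gprops: "openin (top_of_set S) T \<and> S \<subseteq> closure T" if TG: "T \<in> G" for T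
  proof -
    obtain C where C: "C \<in> \<C>" "T = S - E C" using TG by (auto simp: G_def)
    have "E C \<subseteq> S" by (auto simp: E_def)
    then have "openin (top_of_set S) (S - E C)"
      using Eclosed[OF C(1)] by (simp add: closed_subset openin_diff)
    then show ?thesis using dense[OF C(1)] C(2) by simp
  qed
  have "S \<subseteq> closure (\<Inter>G)"
  proof (rule Baire)
    show "closed S" by (simp add: S_def)
    show "countable G" using cC by (simp add: G_def)
    fix T assume "T \<in> G"
    then show "openin (top_of_set S) T \<and> S \<subseteq> closure T" by (rule Gprops)
  qed
  moreover have "\<C> \<noteq> {}" using xP PC by blast
  then have "G \<noteq> {}" by (simp add: G_def)
  then have "\<Inter>G \<subseteq> S" by (auto simp: G_def)
  moreover have "u1 \<in> S" using r(1) by (simp add: S_def)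
  ultimately obtain u where u: "u \<in> \<Inter>G"
    by (metis closure_empty empty_iff subset_empty equals0I)
  then have uS: "u \<in> S" using \<open>\<Inter>G \<subseteq> S\<close> by blast
  have "\<phi> u \<notin> C" if CC: "C \<in> \<C>" for C
  proof -
    have "S - E C \<in> G" using CC by (simp add: G_def)
    then have "u \<in> S - E C" using u by blast
    then show ?thesis by (simp add: E_def)
  qed
  then have uP: "\<phi> u \<notin> P" using PC by blast
  then have uu1: "u \<noteq> u1" using x xP by blast
  define \<alpha> where "\<alpha> s = \<phi> (u1 + s *\<^sub>R (u - u1))" for s :: real
  have seg: "u1 + s *\<^sub>R (u - u1) \<in> S" if "s \<in> {0..1}" for s
  proof -
    have "convex S" by (simp add: S_def)
    moreover have "u1 \<in> S" using r(1) by (simp add: S_def)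
    ultimately have "(1 - s) *\<^sub>R u1 + s *\<^sub>R u \<in> S" using uS that convexD_alt by fastforce
    moreover have "(1 - s) *\<^sub>R u1 + s *\<^sub>R u = u1 + s *\<^sub>R (u - u1)" by (simp add: algebra_simps)
    ultimately show ?thesis by simp
  qed
  have "continuous_on {0..1} \<alpha>"
    unfolding \<alpha>_def
    by (rule continuous_on_compose2[OF continuous_on_subset[OF \<phi>_cont SV]])
       (auto intro!: continuous_intros simp: seg)
  moreover have "inj_on \<alpha> {0..1}"
  proof (rule inj_onI)
    fix s t assume st: "s \<in> {0..1::real}" "t \<in> {0..1::real}" "\<alpha> s = \<alpha> t"
    then have "u1 + s *\<^sub>R (u - u1) = u1 + t *\<^sub>R (u - u1)"
      using inj_\<phi> seg SV unfolding \<alpha>_def by (meson inj_onD subsetD)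
    then have "(s - t) *\<^sub>R (u - u1) = 0" by (simp add: algebra_simps)
    then show "s = t" using uu1 by simp
  qed
  moreover have "\<alpha> 0 = x" using x by (simp add: \<alpha>_def)
  moreover have "\<alpha> ` {0..1} \<subseteq> W" using seg SW unfolding \<alpha>_def by blast
  moreover have "\<alpha> 1 \<notin> P" using uP by (simp add: \<alpha>_def)
  ultimately show ?thesis by blast
qed

lemma funpow_image_fix: "h ` P = P \<Longrightarrow> (h ^^ n) ` P = P"
proof (induction n)
  case 0 then show ?case by simp
next
  case (Suc n)
  have "(h ^^ Suc n) ` P = h ` ((h ^^ n) ` P)" by (simp add: image_comp)
  then show ?case using Suc by simp
qed

lemma funpow_inv:
  assumes "fiM": "fi ` M \<subseteq> M" and ffi: "\<And>y. y \<in> M \<Longrightarrow> f (fi y) = y" and "y \<in> M"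
  shows "(f ^^ n) ((fi ^^ n) y) = y"
  using assms(3)
proof (induction n arbitrary: y)
  case 0 then show ?case by simp
next
  case (Suc n)
  have "(f ^^ Suc n) ((fi ^^ Suc n) y) = (f ^^ n) (f (fi ((fi ^^ n) y)))"
    by (simp only: funpow_Suc_right[of n f] funpow.simps(2)[of n fi] o_def)
  also have "\<dots> = (f ^^ n) ((fi ^^ n) y)" using ffi funpow_M'[OF fiM Suc.prems] by simp
  also have "\<dots> = y" using Suc by blast
  finally show ?case .
qed

lemma family:
  fixes M :: "'a::euclidean_space set"
  assumes fi_def: "fi = inv_into M f"
    and fM: "f ` M \<subseteq> M" and fiM: "fi ` M \<subseteq> M" and ffi: "\<And>y. y \<in> M \<Longrightarrow> f (fi y) = y"
    and fic: "continuous_on M fi"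
    and P: "P \<subseteq> M" "compact P" "connected P" "f ` P = P" "fi ` P = P" "x \<in> P" "p \<in> P" "q \<in> P"
    and \<alpha>: "continuous_on {0..1::real} \<alpha>" "inj_on \<alpha> {0..1}" "\<alpha> 0 = x" "\<alpha> ` {0..1} \<subseteq> S1 \<inter> S2"
      "\<alpha> 1 \<notin> P"
    and S1M: "S1 \<subseteq> M"
    and uS: "\<And>K e. compact K \<Longrightarrow> K \<subseteq> S1 \<Longrightarrow> e > 0 \<Longrightarrow> \<exists>N. \<forall>n\<ge>N. \<forall>y\<in>K. dist ((f ^^ n) y) p < e"
    and uU: "\<And>K e. compact K \<Longrightarrow> K \<subseteq> S2 \<Longrightarrow> e > 0 \<Longrightarrow> \<exists>N. \<forall>n\<ge>N. \<forall>y\<in>K. dist ((fi ^^ n) y) q < e"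
  shows "uncountable {K. K \<in> continuum_nonwandering M f \<and> continuum_homoclinic M f K}"
proof -
  define T where "T = {s \<in> {0..1::real}. \<alpha> s \<in> P}"
  have "closedin (top_of_set {0..1::real}) ({0..1} \<inter> \<alpha> -` P)"
    using continuous_closedin_preimage[OF \<alpha>(1)] compact_imp_closed[OF P(2)] by blast
  then have Tclosed: "closed T" unfolding T_def using closedin_closed_trans[of "{0..1::real}"]
    by (simp add: Int_def vimage_def conj_commute)
  have T0: "0 \<in> T" using \<alpha>(3) P(6) by (simp add: T_def)
  have Tbdd: "bdd_above T" by (auto simp: T_def bdd_above_def)
  define s0 where "s0 = Sup T"
  have s0T: "s0 \<in> T" unfolding s0_def using closed_contains_Sup[OF _ Tbdd Tclosed] T0 by blast
  have "s0 \<le> 1" using s0T by (simp add: T_def)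
  moreover have "s0 \<noteq> 1" using s0T \<alpha>(5) by (auto simp: T_def)
  ultimately have s01: "s0 < 1" by simp
  have s0ge: "s0 \<ge> 0" using s0T by (simp add: T_def)
  have out: "\<alpha> s \<notin> P" if "s0 < s" "s \<le> 1" for s
  proof
    assume "\<alpha> s \<in> P"
    then have "s \<in> T" using that s0ge by (simp add: T_def)
    then have "s \<le> s0" unfolding s0_def using Tbdd by (rule cSup_upper)
    then show False using that by simp
  qed
  define Kf where "Kf s = P \<union> \<alpha> ` {0..s}" for s
  have injK: "inj_on Kf {s0<..1}"
  proof -
    have neq: "Kf s \<noteq> Kf t" if "s \<in> {s0<..1}" "t \<in> {s0<..1}" "s < t" for s t
    proof
      assume eq: "Kf s = Kf t"
      have "\<alpha> t \<in> Kf t" using that s0ge by (auto simp: Kf_def)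
      then have "\<alpha> t \<in> Kf s" using eq by simp
      moreover have "\<alpha> t \<notin> P" using out that by auto
      ultimately obtain s' where s': "s' \<in> {0..s}" "\<alpha> t = \<alpha> s'" by (auto simp: Kf_def)
      then have "t = s'" using \<alpha>(2) that s0ge by (auto simp: inj_on_def)
      then show False using s' that by auto
    qed
    show ?thesis
    proof (rule inj_onI)
      fix s t assume st: "s \<in> {s0<..1}" "t \<in> {s0<..1}" "Kf s = Kf t"
      show "s = t"
      proof (rule linorder_cases[of s t])
        assume "s < t" then show ?thesis using neq st by blast
      next
        assume "t < s" then show ?thesis using neq st by metis
      qed
    qed
  qed
  have fnP: "(f ^^ n) ` P = P" for n using funpow_image_fix[OF P(4)] .
  have finP: "(fi ^^ n) ` P = P" for n using funpow_image_fix[OF P(5)] .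
  have Pne: "P \<noteq> {}" using P(6) by blast
  have Pc: "P \<in> continua M" using P Pne by (simp add: continua_def)
  have good: "Kf s \<in> continuum_nonwandering M f \<and> continuum_homoclinic M f (Kf s)"
    if s: "s \<in> {s0<..1}" for s
  proof -
    define A where "A = \<alpha> ` {0..s}"
    have s1: "s \<le> 1" "0 \<le> s" using s s0ge by auto
    have AS: "A \<subseteq> S1 \<inter> S2" using \<alpha>(4) s1 by (auto simp: A_def)
    have AM: "A \<subseteq> M" using AS S1M by blast
    have Acomp: "compact A" unfolding A_def
      using compact_continuous_image[OF continuous_on_subset[OF \<alpha>(1)]] s1 by auto
    have Aconn: "connected A" unfolding A_def
      using connected_continuous_image[OF continuous_on_subset[OF \<alpha>(1)]] s1 by auto
    have xA: "x \<in> A" using \<alpha>(3) s1 by (force simp: A_def)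
    have sA: "\<alpha> s \<in> A" using s1 by (auto simp: A_def)
    have K: "Kf s = P \<union> A" by (simp add: Kf_def A_def)
    have Kc: "Kf s \<in> continua M"
      unfolding continua_def K using P AM Acomp Aconn xA
      by (auto intro!: compact_Un connected_Un)
    have KP: "Kf s \<noteq> P" using sA out[of s] s K by auto
    have fnK: "(f ^^ n) ` Kf s = P \<union> (f ^^ n) ` A" for n using fnP K by (simp add: image_Un)
    have finK: "(fi ^^ n) ` Kf s = P \<union> (fi ^^ n) ` A" for n using finP K by (simp add: image_Un)
    have hom1: "(\<lambda>n. hausdist ((f ^^ n) ` Kf s) P) \<longlonglongrightarrow> 0"
    proof (rule LIMSEQ_I)
      fix r :: real assume r: "r > 0"
      obtain N where N: "\<forall>n\<ge>N. \<forall>y\<in>A. dist ((f ^^ n) y) p < r / 2"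
        using uS[OF Acomp _ half_gt_zero[OF r]] AS by blast
      have "norm (hausdist ((f ^^ n) ` Kf s) P - 0) < r" if "n \<ge> N" for n
      proof -
        have b: "\<exists>z\<in>P. dist b z \<le> r / 2" if "b \<in> (f ^^ n) ` A" for b
          using that N \<open>n \<ge> N\<close> P(7) by (force intro: less_imp_le)
        have H: "hausdist (P \<union> (f ^^ n) ` A) P \<le> r / 2" "0 \<le> hausdist (P \<union> (f ^^ n) ` A) P"
          using hausdist_Un_le[of P "r / 2" "(f ^^ n) ` A"] Pne r b by auto
        show ?thesis using H r unfolding fnK by auto
      qed
      then show "\<exists>no. \<forall>n\<ge>no. norm (hausdist ((f ^^ n) ` Kf s) P - 0) < r" by blast
    qed
    have hom2: "(\<lambda>n. hausdist ((fi ^^ n) ` Kf s) P) \<longlonglongrightarrow> 0"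
    proof (rule LIMSEQ_I)
      fix r :: real assume r: "r > 0"
      obtain N where N: "\<forall>n\<ge>N. \<forall>y\<in>A. dist ((fi ^^ n) y) q < r / 2"
        using uU[OF Acomp _ half_gt_zero[OF r]] AS by blast
      have "norm (hausdist ((fi ^^ n) ` Kf s) P - 0) < r" if "n \<ge> N" for n
      proof -
        have b: "\<exists>z\<in>P. dist b z \<le> r / 2" if "b \<in> (fi ^^ n) ` A" for b
          using that N \<open>n \<ge> N\<close> P(8) by (force intro: less_imp_le)
        have H: "hausdist (P \<union> (fi ^^ n) ` A) P \<le> r / 2" "0 \<le> hausdist (P \<union> (fi ^^ n) ` A) P"
          using hausdist_Un_le[of P "r / 2" "(fi ^^ n) ` A"] Pne r b by auto
        show ?thesis using H r unfolding finK by auto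
      qed
      then show "\<exists>no. \<forall>n\<ge>no. norm (hausdist ((fi ^^ n) ` Kf s) P - 0) < r" by blast
    qed
    have homo: "continuum_homoclinic M f (Kf s)"
      unfolding continuum_homoclinic_def using Kc Pc KP P(4) hom1 hom2 fi_def by auto
    have nw: "\<exists>n\<ge>1. \<exists>A'\<in>continua M. hausdist A' (Kf s) < \<epsilon> \<and> hausdist ((f ^^ n) ` A') (Kf s) < \<epsilon>"
      if \<epsilon>: "\<epsilon> > 0" for \<epsilon>
    proof -
      obtain N1 where N1: "\<forall>n\<ge>N1. \<forall>y\<in>A. dist ((f ^^ n) y) p < \<epsilon> / 2"
        using uS[OF Acomp _ half_gt_zero[OF \<epsilon>]] AS by blast
      obtain N2 where N2: "\<forall>n\<ge>N2. \<forall>y\<in>A. dist ((fi ^^ n) y) q < \<epsilon> / 2"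
        using uU[OF Acomp _ half_gt_zero[OF \<epsilon>]] AS by blast
      define n where "n = Suc (N1 + N2)"
      define B where "B = (fi ^^ n) ` A"
      have BM: "B \<subseteq> M" using funpow_M[OF fiM, of n] AM by (auto simp: B_def)
      have finc: "continuous_on M (fi ^^ n)" by (rule funpow_cont[OF fic fiM])
      have Bcomp: "compact B" unfolding B_def
        using compact_continuous_image[OF continuous_on_subset[OF finc AM] Acomp] .
      have Bconn: "connected B" unfolding B_def
        using connected_continuous_image[OF continuous_on_subset[OF finc AM] Aconn] .
      have xB: "(fi ^^ n) x \<in> B" using xA by (simp add: B_def)
      have xP': "(fi ^^ n) x \<in> P" using finP[of n] P(6) by blast
      define A' where "A' = Kf s \<union> B"
      have A'c: "A' \<in> continua M"
        using Kc BM Bcomp Bconn xB xP' unfolding continua_def A'_def K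
        by (auto intro!: compact_Un connected_Un)
      have KFne: "Kf s \<noteq> {}" using Kc by (simp add: continua_def)
      have d1: "hausdist A' (Kf s) \<le> \<epsilon> / 2"
      proof -
        have "\<exists>z\<in>Kf s. dist b z \<le> \<epsilon> / 2" if bB: "b \<in> B" for b
        proof -
          obtain a where a: "a \<in> A" "b = (fi ^^ n) a" using bB by (auto simp: B_def)
          have "n \<ge> N2" by (simp add: n_def)
          then have "dist b q < \<epsilon> / 2" using N2 a by blast
          moreover have "q \<in> Kf s" using P(8) K by simp
          ultimately show ?thesis by (force intro: less_imp_le)
        qed
        then show ?thesis unfolding A'_def using hausdist_Un_le(1)[OF KFne, of "\<epsilon> / 2" B] \<epsilon> by simp
      qed
      have fnB: "(f ^^ n) ` B = A"
      proof -
        have "(f ^^ n) ` B = (\<lambda>a. (f ^^ n) ((fi ^^ n) a)) ` A" by (simp add: B_def image_image)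
        also have "\<dots> = (\<lambda>a. a) ` A"
          using funpow_inv[OF fiM ffi] AM by (intro image_cong) auto
        also have "\<dots> = A" by simp
        finally show ?thesis .
      qed
      have fnA': "(f ^^ n) ` A' = Kf s \<union> (f ^^ n) ` A"
        unfolding A'_def using fnK[of n] fnB K by (auto simp: image_Un)
      have d2: "hausdist ((f ^^ n) ` A') (Kf s) \<le> \<epsilon> / 2"
      proof -
        have "\<exists>z\<in>Kf s. dist b z \<le> \<epsilon> / 2" if bB: "b \<in> (f ^^ n) ` A" for b
        proof -
          obtain a where a: "a \<in> A" "b = (f ^^ n) a" using bB by auto
          have "n \<ge> N1" by (simp add: n_def)
          then have "dist b p < \<epsilon> / 2" using N1 a by blast
          moreover have "p \<in> Kf s" using P(7) K by simp
          ultimately show ?thesis by (force intro: less_imp_le)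
        qed
        then show ?thesis unfolding fnA' using hausdist_Un_le(1)[OF KFne, of "\<epsilon> / 2" "(f ^^ n) ` A"] \<epsilon> by simp
      qed
      show ?thesis using d1 d2 A'c \<epsilon> by (intro exI[of _ n] conjI bexI[of _ A']) (auto simp: n_def)
    qed
    have "Kf s \<in> continuum_nonwandering M f"
      unfolding continuum_nonwandering_def using Kc nw by blast
    then show ?thesis using homo by blast
  qed
  have "uncountable (Kf ` {s0<..1})"
  proof
    assume "countable (Kf ` {s0<..1})"
    then have "countable {s0<..1}" using countable_image_inj_on injK by blast
    then show False using s01 uncountable_half_open_interval_2 by blast
  qed
  moreover have "Kf ` {s0<..1} \<subseteq> {K. K \<in> continuum_nonwandering M f \<and> continuum_homoclinic M f K}"
    using good by blast
  ultimately show ?thesis using countable_subset by blast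
qed

lemma P_props:
  fixes M :: "'a::euclidean_space set"
  assumes fM: "f ` M \<subseteq> M" and fiM: "fi ` M \<subseteq> M"
    and fif: "\<And>y. y \<in> M \<Longrightarrow> fi (f y) = y" and ffi: "\<And>y. y \<in> M \<Longrightarrow> f (fi y) = y"
    and fc: "continuous_on M f" and fic: "continuous_on M fi" and Mc: "compact M"
    and fp: "f p = p" and fiq: "fi q = q"
    and \<gamma>: "compact \<gamma>" "connected \<gamma>" "\<gamma> \<subseteq> M" "x \<in> \<gamma>" "f x \<in> \<gamma>"
    and u1: "\<forall>e>0. \<exists>N. \<forall>n\<ge>N. \<forall>y\<in>\<gamma>. dist ((f ^^ n) y) p < e"
    and u2: "\<forall>e>0. \<exists>N. \<forall>n\<ge>N. \<forall>y\<in>\<gamma>. dist ((fi ^^ n) y) q < e"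
  defines "\<Gamma> \<equiv> (\<Union>n. (f ^^ n) ` \<gamma>) \<union> (\<Union>n. (fi ^^ n) ` \<gamma>)"
  shows "closure \<Gamma> \<subseteq> M" "compact (closure \<Gamma>)" "connected (closure \<Gamma>)"
    "f ` closure \<Gamma> = closure \<Gamma>" "fi ` closure \<Gamma> = closure \<Gamma>"
    "x \<in> closure \<Gamma>" "p \<in> closure \<Gamma>" "q \<in> closure \<Gamma>" "closure \<Gamma> \<subseteq> \<Gamma> \<union> {p, q}"
proof -
  have \<Gamma>M: "\<Gamma> \<subseteq> M" unfolding \<Gamma>_def using funpow_M[OF fM] funpow_M[OF fiM] \<gamma>(3) by blast
  have Mcl: "closed M" using Mc compact_imp_closed by blast
  show PM: "closure \<Gamma> \<subseteq> M" using closure_minimal[OF \<Gamma>M Mcl] .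
  show Pc: "compact (closure \<Gamma>)"
    using compact_closure bounded_subset[OF compact_imp_bounded[OF Mc] \<Gamma>M] by blast
  have conn_img: "connected ((h ^^ j) ` \<gamma>)" if "h ` M \<subseteq> M" "continuous_on M h" for h j
    using connected_continuous_image[OF continuous_on_subset[OF funpow_cont[OF that(2,1)] \<gamma>(3)] \<gamma>(2)] .
  define B1 where "B1 n = (\<Union>j\<le>n. (f ^^ j) ` \<gamma>)" for n
  define B2 where "B2 n = (\<Union>j\<le>n. (fi ^^ j) ` \<gamma>)" for n
  have B1c: "connected (B1 n)" for n
  proof (induction n)
    case 0 then show ?case using \<gamma>(2) by (simp add: B1_def)
  next
    case (Suc n)
    have eq: "B1 (Suc n) = B1 n \<union> (f ^^ Suc n) ` \<gamma>" by (auto simp: B1_def atMost_Suc)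
    have "(f ^^ Suc n) x = (f ^^ n) (f x)" by (simp only: funpow_Suc_right o_def)
    moreover have "(f ^^ n) (f x) \<in> B1 n" using \<gamma>(5) by (auto simp: B1_def)
    moreover have "(f ^^ Suc n) x \<in> (f ^^ Suc n) ` \<gamma>" using \<gamma>(4) by blast
    ultimately have "(f ^^ Suc n) x \<in> B1 n \<inter> (f ^^ Suc n) ` \<gamma>" by simp
    then have ne: "B1 n \<inter> (f ^^ Suc n) ` \<gamma> \<noteq> {}" by blast
    show ?case unfolding eq by (rule connected_Un[OF Suc conn_img[OF fM fc] ne])
  qed
  have B2c: "connected (B2 n)" for n
  proof (induction n)
    case 0 then show ?case using \<gamma>(2) by (simp add: B2_def)
  next
    case (Suc n)
    have eq: "B2 (Suc n) = B2 n \<union> (fi ^^ Suc n) ` \<gamma>" by (auto simp: B2_def atMost_Suc)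
    have "(fi ^^ Suc n) (f x) = (fi ^^ n) (fi (f x))" by (simp only: funpow_Suc_right o_def)
    also have "\<dots> = (fi ^^ n) x" using fif \<gamma>(3,4) by auto
    finally have "(fi ^^ Suc n) (f x) = (fi ^^ n) x" .
    then have "(fi ^^ n) x \<in> (fi ^^ Suc n) ` \<gamma>" using \<gamma>(5) by (metis image_eqI)
    moreover have "(fi ^^ n) x \<in> B2 n" using \<gamma>(4) unfolding B2_def by blast
    ultimately have "(fi ^^ n) x \<in> B2 n \<inter> (fi ^^ Suc n) ` \<gamma>" by blast
    then have ne: "B2 n \<inter> (fi ^^ Suc n) ` \<gamma> \<noteq> {}" by blast
    show ?case unfolding eq by (rule connected_Un[OF Suc conn_img[OF fiM fic] ne])
  qed
  have A1: "connected (\<Union>n. (f ^^ n) ` \<gamma>)"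
  proof -
    have "(\<Union>n. (f ^^ n) ` \<gamma>) = \<Union> (range B1)" by (auto simp: B1_def)
    moreover have "connected (\<Union> (range B1))"
      by (rule connected_Union) (use B1c \<gamma>(4) in \<open>auto simp: B1_def intro!: exI[of _ x]\<close>)
    ultimately show ?thesis by simp
  qed
  have A2: "connected (\<Union>n. (fi ^^ n) ` \<gamma>)"
  proof -
    have "(\<Union>n. (fi ^^ n) ` \<gamma>) = \<Union> (range B2)" by (auto simp: B2_def)
    moreover have "connected (\<Union> (range B2))"
      by (rule connected_Union) (use B2c \<gamma>(4) in \<open>auto simp: B2_def intro!: exI[of _ x]\<close>)
    ultimately show ?thesis by simp
  qed
  have x\<Gamma>: "x \<in> \<Gamma>" unfolding \<Gamma>_def using \<gamma>(4) by (auto intro: exI[of _ 0])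
  have "connected \<Gamma>" unfolding \<Gamma>_def
  proof (rule connected_Un[OF A1 A2])
    have "x \<in> (f ^^ 0) ` \<gamma>" "x \<in> (fi ^^ 0) ` \<gamma>" using \<gamma>(4) by auto
    then show "(\<Union>n. (f ^^ n) ` \<gamma>) \<inter> (\<Union>n. (fi ^^ n) ` \<gamma>) \<noteq> {}" by blast
  qed
  then show "connected (closure \<Gamma>)" by (rule connected_imp_connected_closure)
  have f\<Gamma>: "f ` \<Gamma> = \<Gamma>"
  proof (intro equalityI subsetI)
    fix y assume "y \<in> f ` \<Gamma>"
    then obtain z where z: "z \<in> \<Gamma>" "y = f z" by blast
    show "y \<in> \<Gamma>"
    proof (cases "z \<in> (\<Union>n. (f ^^ n) ` \<gamma>)")
      case True
      then obtain n a where "a \<in> \<gamma>" "z = (f ^^ n) a" by blast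
      then have "y = (f ^^ Suc n) a" using z by simp
      then show ?thesis unfolding \<Gamma>_def using \<open>a \<in> \<gamma>\<close> by blast
    next
      case False
      then obtain n a where a: "a \<in> \<gamma>" "z = (fi ^^ n) a" using z unfolding \<Gamma>_def by blast
      show ?thesis
      proof (cases n)
        case 0
        then have "y = (f ^^ 1) a" using z a by simp
        then show ?thesis unfolding \<Gamma>_def using a by blast
      next
        case (Suc m)
        have "(fi ^^ m) a \<in> M" using funpow_M'[OF fiM] a \<gamma>(3) by blast
        then have "y = (fi ^^ m) a" using z a Suc ffi by simp
        then show ?thesis unfolding \<Gamma>_def using a by blast
      qed
    qed
  next
    fix y assume y: "y \<in> \<Gamma>"
    have yM: "y \<in> M" using y \<Gamma>M by blast
    show "y \<in> f ` \<Gamma>"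
    proof (cases "y \<in> (\<Union>n. (f ^^ n) ` \<gamma>)")
      case True
      then obtain n a where a: "a \<in> \<gamma>" "y = (f ^^ n) a" by blast
      show ?thesis
      proof (cases n)
        case 0
        then have "y = f ((fi ^^ 1) a)" using a ffi \<gamma>(3) by auto
        moreover have "(fi ^^ 1) a \<in> \<Gamma>" unfolding \<Gamma>_def using a by blast
        ultimately show ?thesis by blast
      next
        case (Suc m)
        then have "y = f ((f ^^ m) a)" using a by simp
        moreover have "(f ^^ m) a \<in> \<Gamma>" unfolding \<Gamma>_def using a by blast
        ultimately show ?thesis by blast
      qed
    next
      case False
      then obtain n a where a: "a \<in> \<gamma>" "y = (fi ^^ n) a" using y unfolding \<Gamma>_def by blast
      have "y = f ((fi ^^ Suc n) a)" using a ffi yM by simp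
      moreover have "(fi ^^ Suc n) a \<in> \<Gamma>" unfolding \<Gamma>_def using a by blast
      ultimately show ?thesis by blast
    qed
  qed
  show fP: "f ` closure \<Gamma> = closure \<Gamma>"
  proof
    show "f ` closure \<Gamma> \<subseteq> closure \<Gamma>"
      by (rule image_closure_subset[OF continuous_on_subset[OF fc PM]]) (use f\<Gamma> closure_subset in auto)
    have "compact (f ` closure \<Gamma>)" using compact_continuous_image[OF continuous_on_subset[OF fc PM] Pc] .
    then have "closed (f ` closure \<Gamma>)" by (rule compact_imp_closed)
    moreover have "\<Gamma> \<subseteq> f ` closure \<Gamma>" using f\<Gamma> closure_subset by blast
    ultimately show "closure \<Gamma> \<subseteq> f ` closure \<Gamma>" by (rule closure_minimal[rotated])
  qed
  show "fi ` closure \<Gamma> = closure \<Gamma>"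
  proof -
    have "fi ` closure \<Gamma> = fi ` f ` closure \<Gamma>" using fP by simp
    also have "\<dots> = (\<lambda>y. fi (f y)) ` closure \<Gamma>" by (simp add: image_image)
    also have "\<dots> = (\<lambda>y. y) ` closure \<Gamma>" using fif PM by (intro image_cong) auto
    finally show ?thesis by simp
  qed
  show "x \<in> closure \<Gamma>" using x\<Gamma> closure_subset by blast
  show "p \<in> closure \<Gamma>" unfolding closure_approachable
  proof (intro allI impI)
    fix e :: real assume "e > 0"
    then obtain N where "\<forall>n\<ge>N. \<forall>y\<in>\<gamma>. dist ((f ^^ n) y) p < e" using u1 by blast
    then have "dist ((f ^^ N) x) p < e" using \<gamma>(4) by blast
    moreover have "(f ^^ N) x \<in> \<Gamma>" unfolding \<Gamma>_def using \<gamma>(4) by blast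
    ultimately show "\<exists>y\<in>\<Gamma>. dist y p < e" by blast
  qed
  show "q \<in> closure \<Gamma>" unfolding closure_approachable
  proof (intro allI impI)
    fix e :: real assume "e > 0"
    then obtain N where "\<forall>n\<ge>N. \<forall>y\<in>\<gamma>. dist ((fi ^^ n) y) q < e" using u2 by blast
    then have "dist ((fi ^^ N) x) q < e" using \<gamma>(4) by blast
    moreover have "(fi ^^ N) x \<in> \<Gamma>" unfolding \<Gamma>_def using \<gamma>(4) by blast
    ultimately show "\<exists>y\<in>\<Gamma>. dist y q < e" by blast
  qed
  show "closure \<Gamma> \<subseteq> \<Gamma> \<union> {p, q}"
  proof
    fix z assume z: "z \<in> closure \<Gamma>"
    show "z \<in> \<Gamma> \<union> {p, q}"
    proof (rule ccontr)
      assume nz: "z \<notin> \<Gamma> \<union> {p, q}"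
      define e where "e = min (dist z p) (dist z q) / 2"
      have e: "e > 0" using nz by (simp add: e_def)
      obtain N1 where N1: "\<forall>n\<ge>N1. \<forall>y\<in>\<gamma>. dist ((f ^^ n) y) p < e" using u1 e by blast
      obtain N2 where N2: "\<forall>n\<ge>N2. \<forall>y\<in>\<gamma>. dist ((fi ^^ n) y) q < e" using u2 e by blast
      define F where "F = (\<Union>n\<in>{..<N1}. (f ^^ n) ` \<gamma>) \<union> (\<Union>n\<in>{..<N2}. (fi ^^ n) ` \<gamma>)"
      have cimg: "compact ((h ^^ n) ` \<gamma>)" if "h ` M \<subseteq> M" "continuous_on M h" for h n
        using compact_continuous_image[OF continuous_on_subset[OF funpow_cont[OF that(2,1)] \<gamma>(3)] \<gamma>(1)] .
      have "compact F" unfolding F_def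
        using cimg[OF fM fc] cimg[OF fiM fic] by (intro compact_Un compact_UN) auto
      then have Fcl: "closed F" by (rule compact_imp_closed)
      have F\<Gamma>: "F \<subseteq> \<Gamma>" unfolding F_def \<Gamma>_def by blast
      have "\<Gamma> \<subseteq> F \<union> cball p e \<union> cball q e"
      proof
        fix y assume "y \<in> \<Gamma>"
        then consider (a) n a where "a \<in> \<gamma>" "y = (f ^^ n) a" | (b) n a where "a \<in> \<gamma>" "y = (fi ^^ n) a"
          unfolding \<Gamma>_def by blast
        then show "y \<in> F \<union> cball p e \<union> cball q e"
        proof cases
          case (a n a)
          show ?thesis
          proof (cases "n < N1")
            case True then show ?thesis using a unfolding F_def by blast
          next
            case False
            then have "dist y p < e" using N1 a by auto
            then show ?thesis by (simp add: dist_commute)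
          qed
        next
          case (b n a)
          show ?thesis
          proof (cases "n < N2")
            case True then show ?thesis using b unfolding F_def by blast
          next
            case False
            then have "dist y q < e" using N2 b by auto
            then show ?thesis by (simp add: dist_commute)
          qed
        qed
      qed
      moreover have "closed (F \<union> cball p e \<union> cball q e)" using Fcl by (intro closed_Un) auto
      ultimately have "closure \<Gamma> \<subseteq> F \<union> cball p e \<union> cball q e" by (rule closure_minimal)
      then have "z \<in> F \<union> cball p e \<union> cball q e" using z by blast
      moreover have "z \<notin> F" using F\<Gamma> nz by blast
      moreover have "dist p z > e" "dist q z > e"
      proof -
        have "e \<le> dist z p / 2" "e \<le> dist z q / 2" unfolding e_def by auto
        then show "dist p z > e" "dist q z > e" using e by (simp_all add: dist_commute)
      qed
      ultimately show False by auto
    qed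
  qed
qed

lemma funpow_inj: "inj_on h M \<Longrightarrow> h ` M \<subseteq> M \<Longrightarrow> inj_on (h ^^ n) M"
proof (induction n)
  case 0 then show ?case by simp
next
  case (Suc n)
  have "inj_on (h \<circ> (h ^^ n)) M"
    by (rule comp_inj_on[OF Suc.IH[OF Suc.prems] inj_on_subset[OF Suc.prems(1) funpow_M[OF Suc.prems(2)]]])
  then show ?case by (simp add: o_def)
qed

theorem proposition3p4:
  fixes M :: "'a::euclidean_space set" and f :: "'a \<Rightarrow> 'a" and p q x :: 'a
  assumes "DIM('m::euclidean_space) \<ge> 2"
    and "closed_manifold TYPE('m) M"
    and "Morse_Smale TYPE('m) M f"
    and "attractor_periodic_point M f p"
    and "repeller_periodic_point M f q"
    and "x \<in> stable_set M f p \<inter> unstable_set M f q"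
    and "arc g" and "path_image g \<subseteq> stable_set M f p \<inter> unstable_set M f q"
    and "pathstart g = x" and "pathfinish g = f x"
  shows "uncountable {K. K \<in> continuum_nonwandering M f \<and> continuum_homoclinic M f K}"
proof -
  note dim = assms(1)
  define fi where "fi = inv_into M f"
  have sm: "submanifold_without_boundary TYPE('m) M" and Mc: "compact M"
    using assms(2) unfolding closed_manifold_def by auto
  have diffeo: "C1_diffeomorphism TYPE('m) M f" using assms(3) unfolding Morse_Smale_def by blast
  then have bij: "bij_betw f M M" and C1f: "C1_on_manifold TYPE('m) M f"
    and C1fi: "C1_on_manifold TYPE('m) M fi"
    unfolding C1_diffeomorphism_def fi_def by auto
  have fM: "f ` M \<subseteq> M" using bij_betw_imp_surj_on[OF bij] by simp
  have fiM: "fi ` M \<subseteq> M" using bij_betw_imp_surj_on[OF bij_betw_inv_into[OF bij]] by (simp add: fi_def)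
  have injf: "inj_on f M" using bij_betw_imp_inj_on[OF bij] .
  have fif: "\<And>y. y \<in> M \<Longrightarrow> fi (f y) = y" unfolding fi_def using inv_into_f_f[OF injf] .
  have ffi: "\<And>y. y \<in> M \<Longrightarrow> f (fi y) = y"
    unfolding fi_def using f_inv_into_f bij_betw_imp_surj_on[OF bij] by metis
  have injfi: "inj_on fi M" by (rule inj_onI) (metis ffi)
  have fc: "continuous_on M f" using C1_cont[OF sm C1f] .
  have fic: "continuous_on M fi" using C1_cont[OF sm C1fi] .
  define Ws where "Ws = stable_set M f p"
  define Wu where "Wu = stable_set M fi q"
  have Wu_eq: "unstable_set M f q = Wu" by (simp add: Wu_def fi_def unstable_set_def)
  have xW: "x \<in> Ws" "x \<in> Wu" using assms(6) Wu_eq by (auto simp: Ws_def)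
  have fxW: "f x \<in> Ws" "f x \<in> Wu"
    using assms(8) pathfinish_in_path_image[of g] assms(10) Wu_eq by (auto simp: Ws_def)
  have xM: "x \<in> M" using xW by (simp add: Ws_def stable_set_def)
  obtain kp Es where pM: "p \<in> M" and kp: "kp > 0" "(f ^^ kp) p = p"
    and hsp: "hyperbolic_splitting M f p kp Es {0}"
    using assms(4) unfolding attractor_periodic_point_def by blast
  have fp: "f p = p"
  proof (rule fixed_from_stable[OF fM kp])
    show "(\<lambda>n. dist ((f ^^ n) x) ((f ^^ n) p)) \<longlonglongrightarrow> 0" using xW by (simp add: Ws_def stable_set_def)
    show "(\<lambda>n. dist ((f ^^ n) (f x)) ((f ^^ n) p)) \<longlonglongrightarrow> 0" using fxW by (simp add: Ws_def stable_set_def)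
  qed
  obtain kq Eu where qM: "q \<in> M" and kq: "kq > 0" "(f ^^ kq) q = q"
    and hsq: "hyperbolic_splitting M f q kq {0} Eu"
    using assms(5) unfolding repeller_periodic_point_def by blast
  have kq': "(fi ^^ kq) q = q"
    using funpow_inv[of f M fi, OF fM fif qM, of kq] kq(2) by simp
  have fiq: "fi q = q"
  proof (rule fixed_from_stable[OF fiM kq(1) kq'])
    show "(\<lambda>n. dist ((fi ^^ n) (f x)) ((fi ^^ n) q)) \<longlonglongrightarrow> 0" using fxW by (simp add: Wu_def stable_set_def)
    show "(\<lambda>n. dist ((fi ^^ n) (fi (f x))) ((fi ^^ n) q)) \<longlonglongrightarrow> 0"
      using xW fif[OF xM] by (simp add: Wu_def stable_set_def)
  qed
  have fq: "f q = q" using ffi[OF qM] fiq by simp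
  obtain Up where Up: "openin (top_of_set M) Up" "p \<in> Up"
    "\<forall>e>0. \<exists>N. \<forall>n\<ge>N. \<forall>y\<in>Up. dist ((f ^^ n) y) p < e"
  proof -
    obtain \<phi> :: "'m \<Rightarrow> 'a" and V \<psi> D u0 where ch: "chartp M \<phi> V \<psi> D u0" "\<phi> u0 = p" "chart_param M \<phi> V"
      using chart_obtain[OF sm pM] by metis
    interpret cp: chartp M \<phi> V \<psi> D u0 by (rule ch(1))
    obtain Bf where Bf: "((\<lambda>u. f (\<phi> u)) has_derivative Bf) (at u0)"
      using C1_der[OF C1f ch(3) cp.u0V] by blast
    have fp': "f (\<phi> u0) = \<phi> u0" using fp ch(2) by simp
    have hs': "hyperbolic_splitting M f (\<phi> u0) kp Es {0}" using hsp ch(2) by simp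
    obtain U a where Ua: "a > 0" "openin (top_of_set M) U" "\<phi> u0 \<in> U"
      "\<forall>e>0. \<exists>N. \<forall>n\<ge>N. \<forall>y\<in>U. dist ((f ^^ (a * n)) y) (\<phi> u0) < e"
      using cp.sink_local[OF fM fp' Bf kp(1) hs'] by blast
    have UM: "U \<subseteq> M" using Ua(2) by (rule openin_imp_subset)
    have "\<forall>e>0. \<exists>N. \<forall>n\<ge>N. \<forall>y\<in>U. dist ((f ^^ n) y) p < e"
      using lift_mult[OF fM fc fp pM Ua(1) UM] Ua(4) ch(2) by simp
    then show thesis using that Ua(2,3) ch(2) by blast
  qed
  obtain Uq where Uq: "openin (top_of_set M) Uq" "q \<in> Uq"
    "\<forall>e>0. \<exists>N. \<forall>n\<ge>N. \<forall>y\<in>Uq. dist ((fi ^^ n) y) q < e"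
  proof -
    obtain \<phi> :: "'m \<Rightarrow> 'a" and V \<psi> D u0 where ch: "chartp M \<phi> V \<psi> D u0" "\<phi> u0 = q" "chart_param M \<phi> V"
      using chart_obtain[OF sm qM] by metis
    interpret cp: chartp M \<phi> V \<psi> D u0 by (rule ch(1))
    obtain Bf where Bf: "((\<lambda>u. f (\<phi> u)) has_derivative Bf) (at u0)"
      using C1_der[OF C1f ch(3) cp.u0V] by blast
    obtain Bg where Bg: "((\<lambda>u. fi (\<phi> u)) has_derivative Bg) (at u0)"
      using C1_der[OF C1fi ch(3) cp.u0V] by blast
    have fq': "f (\<phi> u0) = \<phi> u0" using fq ch(2) by simp
    have fiq': "fi (\<phi> u0) = \<phi> u0" using fiq ch(2) by simp
    have hs': "hyperbolic_splitting M f (\<phi> u0) kq {0} Eu" using hsq ch(2) by simp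
    obtain U a where Ua: "a > 0" "openin (top_of_set M) U" "\<phi> u0 \<in> U"
      "\<forall>e>0. \<exists>N. \<forall>n\<ge>N. \<forall>y\<in>U. dist ((fi ^^ (a * n)) y) (\<phi> u0) < e"
      using cp.source_local[OF fM fq' fiM fiq' fif Bf Bg kq(1) hs'] by blast
    have UM: "U \<subseteq> M" using Ua(2) by (rule openin_imp_subset)
    have "\<forall>e>0. \<exists>N. \<forall>n\<ge>N. \<forall>y\<in>U. dist ((fi ^^ n) y) q < e"
      using lift_mult[OF fiM fic fiq qM Ua(1) UM] Ua(4) ch(2) by simp
    then show thesis using that Ua(2,3) ch(2) by blast
  qed
  have Ws_open: "openin (top_of_set M) Ws" unfolding Ws_def by (rule stable_open[OF fM fc fp Up])
  have Wu_open: "openin (top_of_set M) Wu" unfolding Wu_def by (rule stable_open[OF fiM fic fiq Uq])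
  have uS: "\<exists>N. \<forall>n\<ge>N. \<forall>y\<in>K. dist ((f ^^ n) y) p < e" if "compact K" "K \<subseteq> Ws" "e > 0" for K e
    using uniform_compact[OF fM fc fp Up that(1)] that(2,3) by (simp add: Ws_def)
  have uU: "\<exists>N. \<forall>n\<ge>N. \<forall>y\<in>K. dist ((fi ^^ n) y) q < e" if "compact K" "K \<subseteq> Wu" "e > 0" for K e
    using uniform_compact[OF fiM fic fiq Uq that(1)] that(2,3) by (simp add: Wu_def)
  define \<gamma> where "\<gamma> = path_image g"
  have pg: "path g" "inj_on g {0..1}" using assms(7) by (auto simp: arc_def)
  have WsM: "Ws \<subseteq> M" by (auto simp: Ws_def stable_set_def)
  have \<gamma>W: "\<gamma> \<subseteq> Ws \<inter> Wu" using assms(8) Wu_eq by (simp add: \<gamma>_def Ws_def)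
  have \<gamma>: "compact \<gamma>" "connected \<gamma>" "\<gamma> \<subseteq> M" "x \<in> \<gamma>" "f x \<in> \<gamma>"
    using compact_path_image[OF pg(1)] connected_path_image[OF pg(1)] \<gamma>W WsM
      pathstart_in_path_image[of g] pathfinish_in_path_image[of g] assms(9,10)
    by (auto simp: \<gamma>_def)
  have u1: "\<forall>e>0. \<exists>N. \<forall>n\<ge>N. \<forall>y\<in>\<gamma>. dist ((f ^^ n) y) p < e" using uS[OF \<gamma>(1)] \<gamma>W by blast
  have u2: "\<forall>e>0. \<exists>N. \<forall>n\<ge>N. \<forall>y\<in>\<gamma>. dist ((fi ^^ n) y) q < e" using uU[OF \<gamma>(1)] \<gamma>W by blast
  define \<Gamma> where "\<Gamma> = (\<Union>n. (f ^^ n) ` \<gamma>) \<union> (\<Union>n. (fi ^^ n) ` \<gamma>)"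
  define P where "P = closure \<Gamma>"
  note PP = P_props[OF fM fiM fif ffi fc fic Mc fp fiq \<gamma> u1 u2, folded \<Gamma>_def P_def]
  define \<C> where "\<C> = {{p}, {q}} \<union> range (\<lambda>n. (f ^^ n) ` \<gamma>) \<union> range (\<lambda>n. (fi ^^ n) ` \<gamma>)"
  have PC: "P \<subseteq> \<Union>\<C>"
  proof
    fix z assume "z \<in> P"
    then have "z \<in> \<Gamma> \<union> {p, q}" using PP(9) by blast
    then consider "z = p" | "z = q" | n where "z \<in> (f ^^ n) ` \<gamma>" | n where "z \<in> (fi ^^ n) ` \<gamma>"
      unfolding \<Gamma>_def by blast
    then show "z \<in> \<Union>\<C>"
    proof cases
      case 1 then show ?thesis unfolding \<C>_def by blast
    next
      case 2 then show ?thesis unfolding \<C>_def by blast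
    next
      case (3 n)
      have "(f ^^ n) ` \<gamma> \<in> \<C>" unfolding \<C>_def by blast
      then show ?thesis using 3 by blast
    next
      case (4 n)
      have "(fi ^^ n) ` \<gamma> \<in> \<C>" unfolding \<C>_def by blast
      then show ?thesis using 4 by blast
    qed
  qed
  have cC: "countable \<C>" unfolding \<C>_def by simp
  have arcimg: "\<exists>c. continuous_on {0..1::real} c \<and> inj_on c {0..1} \<and> (h ^^ n) ` \<gamma> = c ` {0..1}"
    if "h ` M \<subseteq> M" "continuous_on M h" "inj_on h M" for h n
  proof (intro exI conjI)
    have gM: "g ` {0..1} \<subseteq> M" using \<gamma>(3) by (simp add: \<gamma>_def path_image_def)
    show "continuous_on {0..1} ((h ^^ n) \<circ> g)"
      using continuous_on_compose[OF pg(1)[unfolded path_def] continuous_on_subset[OF funpow_cont[OF that(2,1)] gM]] .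
    show "inj_on ((h ^^ n) \<circ> g) {0..1}"
      by (rule comp_inj_on[OF pg(2)]) (rule inj_on_subset[OF funpow_inj[OF that(3,1)] gM])
    show "(h ^^ n) ` \<gamma> = ((h ^^ n) \<circ> g) ` {0..1}" by (simp add: \<gamma>_def path_image_def image_comp)
  qed
  have arcs: "(\<exists>z. C = {z}) \<or> (\<exists>c. continuous_on {0..1::real} c \<and> inj_on c {0..1} \<and> C = c ` {0..1})"
    if CC: "C \<in> \<C>" for C
  proof -
    from CC consider "C = {p}" | "C = {q}" | n where "C = (f ^^ n) ` \<gamma>" | n where "C = (fi ^^ n) ` \<gamma>"
      unfolding \<C>_def by blast
    then show ?thesis
    proof cases
      case 1 then show ?thesis by blast
    next
      case 2 then show ?thesis by blast
    next
      case (3 n) then show ?thesis using arcimg[OF fM fc injf, of n] by metis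
    next
      case (4 n) then show ?thesis using arcimg[OF fiM fic injfi, of n] by metis
    qed
  qed
  have W: "openin (top_of_set M) (Ws \<inter> Wu)" "x \<in> Ws \<inter> Wu"
    using openin_Int[OF Ws_open Wu_open] xW by auto
  obtain \<alpha> where \<alpha>: "continuous_on {0..1::real} \<alpha>" "inj_on \<alpha> {0..1}" "\<alpha> 0 = x"
    "\<alpha> ` {0..1} \<subseteq> Ws \<inter> Wu" "\<alpha> 1 \<notin> P"
  proof -
    obtain \<phi> :: "'m \<Rightarrow> 'a" and V \<psi> D u0 where ch: "chartp M \<phi> V \<psi> D u0" "\<phi> u0 = x" "chart_param M \<phi> V"
      using chart_obtain[OF sm xM] by metis
    show thesis using find_arc_out[OF ch(1,2) dim W PP(6) PC cC arcs] that by blast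
  qed
  show ?thesis
    by (rule family[OF fi_def fM fiM ffi fic PP(1-8)[folded P_def] \<alpha> WsM uS uU])
qed

end
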